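(* Let $\Omega\subset S^{n-1}$ be a closed set not contained in any closed hemisphere of $S^{n-1}$. Let $h_0:\Omega\rightarrow(0,\infty)$ and $f:\Omega\rightarrow\mathbb{R}$ be continuous, and let $[h_t]$ be a logarithmic family of Wulff shapes generated by $(h_0,f)$. Then for every $Q\in\mathcal{S}_o^n$, $j\neq n$, $q\neq0$, $$\lim_{t\rightarrow0}\frac{\widetilde{W}_{q,j}([h_t],Q)-\widetilde{W}_{q,j}([h_0],Q)}{t}=q\int_{\Omega}f(v)\,d\widetilde{\mathcal{C}}_{q,j}([h_0],Q,v).$$
   Context: $\mathcal{K}_o^n$: convex bodies in $\mathbb{R}^n$ containing the origin in their interiors; $\mathcal{S}_o^n$: compact sets star-shaped about the origin with positive continuous radial function $\rho_Q(x)=\max\{\lambda\ge0:\lambda x\in Q\}$. $h_M$ is the support function, $du$ spherical Lebesgue measure. A logarithmic family of Wulff shapes generated by $(h_0,f)$: for some $\delta>0$ and each $t\in(-\delta,\delta)$, $h_t:\Omega\to(0,\infty)$ is continuous with $\log h_t(v)=\log h_0(v)+tf(v)+o(t,v)$, where $o(t,\cdot)$ is continuous on $\Omega$ and $o(t,\cdot)/t\to0$ uniformly on $\Omega$ as $t\to0$; and $[h_t]=\{x\in\mathbb{R}^n:x\cdot v\le h_t(v)\ \forall v\in\Omega\}$. For $q\in\mathbb{R}$, $j\ne n$, $M\in\mathcal{K}_o^n$, $Q\in\mathcal{S}_o^n$: $\widetilde{W}_{q,j}(M,Q)=\frac1n\int_{S^{n-1}}\rho_M^q\rho_Q^{n-q-j}\,du$;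 $R^*_M(\eta)=\{u\in S^{n-1}:\rho_M(u)u\cdot v=h_M(v)\text{ for some }v\in\eta\}$ for Borel $\eta\subseteq S^{n-1}$; and $\widetilde{\mathcal{C}}_{q,j}(M,Q,\eta)=\frac1n\int_{R^*_M(\eta)}\rho_M^q(u)\rho_Q^{n-q-j}(u)\,du$. *)

theory Defs
  imports "HOL-Analysis.Analysis"
begin

definition unit_cone :: "'a::euclidean_space set \<Rightarrow> 'a set" where
  "unit_cone A = {r *\<^sub>R u | r u. 0 < r \<and> r \<le> 1 \<and> u \<in> A}"

text \<open>Spherical Lebesgue measure: sigma(A) = n * Lebesgue measure of the cone
  {r u : 0 < r <= 1, u in A}; it is defined on the Lebesgue-measurable subsets
  of the sphere.\<close>
definition sphere_measure :: "'a::euclidean_space measure" where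
  "sphere_measure = measure_of (sphere 0 1)
     {A. A \<subseteq> sphere 0 1 \<and> unit_cone A \<in> sets lebesgue}
     (\<lambda>A. ennreal (real DIM('a)) * emeasure lebesgue (unit_cone A))"

definition support_fun :: "'a::euclidean_space set \<Rightarrow> 'a \<Rightarrow> real" where
  "support_fun M v = Sup {x \<bullet> v | x. x \<in> M}"

definition radial_fun :: "'a::euclidean_space set \<Rightarrow> 'a \<Rightarrow> real" where
  "radial_fun Q x = Sup {s. 0 \<le> s \<and> s *\<^sub>R x \<in> Q}"

definition convex_body_o :: "'a::euclidean_space set \<Rightarrow> bool" where
  "convex_body_o M \<longleftrightarrow> convex M \<and> compact M \<and> 0 \<in> interior M"

definition star_body_o :: "'a::euclidean_space set \<Rightarrow> bool" where
  "star_body_o Q \<longleftrightarrow> compact Q \<and> 0 \<in> Q \<and> (\<forall>x\<in>Q. closed_segment 0 x \<subseteq> Q)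
     \<and> (\<forall>u\<in>sphere 0 1. radial_fun Q u > 0) \<and> continuous_on (sphere 0 1) (radial_fun Q)"

definition wulff_shape :: "'a::euclidean_space set \<Rightarrow> ('a \<Rightarrow> real) \<Rightarrow> 'a set" where
  "wulff_shape \<Omega> h = {x. \<forall>v\<in>\<Omega>. x \<bullet> v \<le> h v}"

definition closed_hemisphere :: "'a::euclidean_space \<Rightarrow> 'a set" where
  "closed_hemisphere u = {v \<in> sphere 0 1. v \<bullet> u \<ge> 0}"

definition log_family :: "'a::euclidean_space set \<Rightarrow> (real \<Rightarrow> 'a \<Rightarrow> real) \<Rightarrow> ('a \<Rightarrow> real) \<Rightarrow> bool" where
  "log_family \<Omega> h f \<longleftrightarrow> (\<exists>\<delta>>0. \<exists>e::real \<Rightarrow> 'a \<Rightarrow> real.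
      (\<forall>t\<in>{-\<delta><..<\<delta>}. continuous_on \<Omega> (h t) \<and> (\<forall>v\<in>\<Omega>. h t v > 0)
         \<and> continuous_on \<Omega> (e t)
         \<and> (\<forall>v\<in>\<Omega>. ln (h t v) = ln (h 0 v) + t * f v + e t v))
      \<and> uniform_limit \<Omega> (\<lambda>t v. e t v / t) (\<lambda>v. 0) (at 0))"

definition dual_quermass :: "real \<Rightarrow> real \<Rightarrow> 'a::euclidean_space set \<Rightarrow> 'a set \<Rightarrow> real" where
  "dual_quermass q j M Q = (1 / real DIM('a)) *
     (\<integral>u. radial_fun M u powr q * radial_fun Q u powr (real DIM('a) - q - j) \<partial>sphere_measure)"

definition radial_gauss_image_star :: "'a::euclidean_space set \<Rightarrow> 'a set \<Rightarrow> 'a set" where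
  "radial_gauss_image_star M \<eta> =
     {u \<in> sphere 0 1. \<exists>v\<in>\<eta>. radial_fun M u * (u \<bullet> v) = support_fun M v}"

definition dual_curv_measure :: "real \<Rightarrow> real \<Rightarrow> 'a::euclidean_space set \<Rightarrow> 'a set \<Rightarrow> 'a measure" where
  "dual_curv_measure q j M Q = measure_of (sphere 0 1) (sets (restrict_space borel (sphere 0 1)))
     (\<lambda>\<eta>. ennreal (1 / real DIM('a)) *
        (\<integral>\<^sup>+u\<in>radial_gauss_image_star M \<eta>.
            ennreal (radial_fun M u powr q * radial_fun Q u powr (real DIM('a) - q - j)) \<partial>sphere_measure))"

end

theory Submission
  imports Defs
begin

lemma argmax_mono:
  fixes x y p1 q2 :: "'a::euclidean_space"
  assumes "x \<bullet> q2 \<le> x \<bullet> p1" "y \<bullet> p1 \<le> y \<bullet> q2"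
  shows "0 \<le> (x - y) \<bullet> (p1 - q2)"
  using assms by (simp add: inner_diff_left inner_diff_right)

lemma key_ineq:
  fixes x y p1 p2 q1 q2 a1 a2 :: "'a::euclidean_space"
  assumes "0 \<le> (x - y) \<bullet> (p1 - q2)" "0 \<le> (x - y) \<bullet> (p2 - q1)"
    and "norm (p1 - a1) < d/8" "norm (p2 - a2) < d/8" "norm (q1 - a1) < d/8" "norm (q2 - a2) < d/8"
  shows "\<bar>(x - y) \<bullet> (a1 - a2)\<bar> \<le> norm (x - y) * d / 4"
proof -
  define w where "w = x - y"
  have b: "\<bar>w \<bullet> z\<bar> \<le> norm w * norm z" for z by (rule Cauchy_Schwarz_ineq2)
  have "w \<bullet> (a1 - a2) = w \<bullet> (p1 - q2) + w \<bullet> (a1 - p1) + w \<bullet> (q2 - a2)"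
    by (simp add: inner_diff_right)
  moreover have "\<bar>w \<bullet> (a1 - p1)\<bar> \<le> norm w * (d/8)"
    using b[of "a1 - p1"] assms(3) by (smt (verit) mult_left_mono norm_ge_zero norm_minus_commute)
  moreover have "\<bar>w \<bullet> (q2 - a2)\<bar> \<le> norm w * (d/8)"
    using b[of "q2 - a2"] assms(6) by (smt (verit) mult_left_mono norm_ge_zero)
  ultimately have 1: "w \<bullet> (a1 - a2) \<ge> - (norm w * d / 4)" using assms(1) unfolding w_def by linarith
  have "w \<bullet> (a2 - a1) = w \<bullet> (p2 - q1) + w \<bullet> (a2 - p2) + w \<bullet> (q1 - a1)"
    by (simp add: inner_diff_right)
  moreover have "\<bar>w \<bullet> (a2 - p2)\<bar> \<le> norm w * (d/8)"
    using b[of "a2 - p2"] assms(4) by (smt (verit) mult_left_mono norm_ge_zero norm_minus_commute)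
  moreover have "\<bar>w \<bullet> (q1 - a1)\<bar> \<le> norm w * (d/8)"
    using b[of "q1 - a1"] assms(5) by (smt (verit) mult_left_mono norm_ge_zero)
  ultimately have 2: "w \<bullet> (a2 - a1) \<ge> - (norm w * d / 4)" using assms(2) unfolding w_def by linarith
  have "w \<bullet> (a2 - a1) = - (w \<bullet> (a1 - a2))" by (simp add: inner_diff_right)
  with 1 2 show ?thesis unfolding w_def by linarith
qed

definition multi_argmax :: "'a::euclidean_space set \<Rightarrow> 'a set" where
  "multi_argmax P = {x. \<exists>p1\<in>P. \<exists>p2\<in>P. p1 \<noteq> p2 \<and> (\<forall>p\<in>P. x \<bullet> p \<le> x \<bullet> p1 \<and> x \<bullet> p \<le> x \<bullet> p2)}"

lemma negligible_piece:
  fixes P :: "'a::euclidean_space set" and a1 a2 :: 'a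
  assumes "a1 \<noteq> a2"
  defines "d \<equiv> norm (a1 - a2)"
  shows "negligible {x. \<exists>p1\<in>P. \<exists>p2\<in>P. (\<forall>p\<in>P. x \<bullet> p \<le> x \<bullet> p1 \<and> x \<bullet> p \<le> x \<bullet> p2)
            \<and> norm (p1 - a1) < d/8 \<and> norm (p2 - a2) < d/8}" (is "negligible ?F")
proof -
  have dpos: "d > 0" using assms by (simp add: d_def)
  define e where "e = (a1 - a2) /\<^sub>R d"
  have ne: "norm e = 1" using dpos by (simp add: e_def d_def)
  define \<pi> where "\<pi> x = x - (x \<bullet> e) *\<^sub>R e" for x
  have close: "\<bar>(x - y) \<bullet> e\<bar> \<le> norm (x - y) / 4" if xF: "x \<in> ?F" and yF: "y \<in> ?F" for x y
  proof -
    from xF obtain p1 p2 where p: "p1\<in>P" "p2\<in>P" "\<forall>p\<in>P. x \<bullet> p \<le> x \<bullet> p1 \<and> x \<bullet> p \<le> x \<bullet> p2"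
      "norm (p1 - a1) < d/8" "norm (p2 - a2) < d/8" by (auto simp only: mem_Collect_eq)
    from yF obtain q1 q2 where q: "q1\<in>P" "q2\<in>P" "\<forall>p\<in>P. y \<bullet> p \<le> y \<bullet> q1 \<and> y \<bullet> p \<le> y \<bullet> q2"
      "norm (q1 - a1) < d/8" "norm (q2 - a2) < d/8" by (auto simp only: mem_Collect_eq)
    have "x \<bullet> q2 \<le> x \<bullet> p1" using p(3) q(2) by simp
    moreover have "y \<bullet> p1 \<le> y \<bullet> q2" using q(3) p(1) by simp
    ultimately have m1: "0 \<le> (x - y) \<bullet> (p1 - q2)" by (rule argmax_mono)
    have "x \<bullet> q1 \<le> x \<bullet> p2" using p(3) q(1) by simp
    moreover have "y \<bullet> p2 \<le> y \<bullet> q1" using q(3) p(2) by simp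
    ultimately have m2: "0 \<le> (x - y) \<bullet> (p2 - q1)" by (rule argmax_mono)
    have k: "\<bar>(x - y) \<bullet> (a1 - a2)\<bar> \<le> norm (x - y) * d / 4"
      by (rule key_ineq[OF m1 m2 p(4,5) q(4,5)])
    have eq: "(x - y) \<bullet> e = ((x - y) \<bullet> (a1 - a2)) / d"
      unfolding e_def by (simp add: inner_scaleR_right divide_inverse_commute)
    have "\<bar>((x - y) \<bullet> (a1 - a2)) / d\<bar> = \<bar>(x - y) \<bullet> (a1 - a2)\<bar> / d" using dpos by simp
    also have "\<dots> \<le> (norm (x - y) * d / 4) / d" by (rule divide_right_mono[OF k]) (use dpos in simp)
    also have "\<dots> = norm (x - y) / 4" using dpos by simp
    finally show ?thesis using eq by simp
  qed
  have ee: "e \<bullet> e = 1" using power2_norm_eq_inner[of e] ne by simp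
  have lip: "norm (x - y) \<le> 4/3 * norm (\<pi> x - \<pi> y)" if "x \<in> ?F" "y \<in> ?F" for x y
  proof -
    have "\<pi> x - \<pi> y = (x - y) - ((x - y) \<bullet> e) *\<^sub>R e" by (simp add: \<pi>_def algebra_simps inner_diff_left)
    moreover have "norm (((x - y) \<bullet> e) *\<^sub>R e) = \<bar>(x - y) \<bullet> e\<bar>" using ne by simp
    moreover have "norm (x - y) - norm (((x - y) \<bullet> e) *\<^sub>R e) \<le> norm ((x - y) - ((x - y) \<bullet> e) *\<^sub>R e)"
      by (rule norm_triangle_ineq2)
    ultimately have "norm (\<pi> x - \<pi> y) \<ge> norm (x - y) - \<bar>(x - y) \<bullet> e\<bar>" by (simp only:)
    with close[OF that(1) that(2)] show ?thesis by linarith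
  qed
  define g where "g z = (SOME x. x \<in> ?F \<and> \<pi> x = z)" for z
  have g: "g (\<pi> x) \<in> ?F \<and> \<pi> (g (\<pi> x)) = \<pi> x" if "x \<in> ?F" for x
    unfolding g_def by (rule someI[of _ x]) (rule conjI[OF that refl])
  have gx: "g (\<pi> x) = x" if "x \<in> ?F" for x
  proof -
    have "norm (g (\<pi> x) - x) \<le> 4/3 * norm (\<pi> (g (\<pi> x)) - \<pi> x)"
      by (rule lip) (use g[OF that] that in auto)
    then show ?thesis using g[OF that] by simp
  qed
  have sub: "?F \<subseteq> g ` (\<pi> ` ?F)"
  proof
    fix x assume x: "x \<in> ?F"
    then have "x = g (\<pi> x)" using gx by simp
    then show "x \<in> g ` (\<pi> ` ?F)" using x by (rule image_eqI[OF _ imageI])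
  qed
  have pe: "e \<bullet> \<pi> x = 0" for x
    by (simp add: \<pi>_def inner_diff_right inner_commute ee)
  have "negligible (g ` (\<pi> ` ?F))"
  proof (rule negligible_locally_Lipschitz_image)
    have "\<pi> ` ?F \<subseteq> {z. e \<bullet> z = 0}" using pe by blast
    then show "negligible (\<pi> ` ?F)" by (rule negligible_subset[OF negligible_hyperplane[of e 0], rotated]) (use ne in auto)
    fix z assume "z \<in> \<pi> ` ?F"
    then obtain x where x: "x \<in> ?F" "z = \<pi> x" by blast
    have "\<forall>y\<in>\<pi> ` ?F \<inter> UNIV. norm (g y - g z) \<le> 4/3 * norm (y - z)"
    proof
      fix y assume "y \<in> \<pi> ` ?F \<inter> UNIV"
      then obtain x' where x': "x' \<in> ?F" "y = \<pi> x'" by blast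
      show "norm (g y - g z) \<le> 4/3 * norm (y - z)"
        using lip[OF x'(1) x(1)] gx[OF x'(1)] gx[OF x(1)] x'(2) x(2) by simp
    qed
    then show "\<exists>T B. open T \<and> z \<in> T \<and> (\<forall>y\<in>\<pi> ` ?F \<inter> T. norm (g y - g z) \<le> B * norm (y - z))"
      by blast
  qed simp
  then show ?thesis using sub negligible_subset by blast
qed

lemma negligible_multi_argmax:
  fixes P :: "'a::euclidean_space set"
  shows "negligible (multi_argmax P)"
proof -
  obtain D :: "'a set" where D: "countable D" "\<And>X. open X \<Longrightarrow> X \<noteq> {} \<Longrightarrow> \<exists>d\<in>D. d \<in> X"
    using countable_dense_setE by blast
  define F where "F = (\<lambda>(a1::'a, a2). {x. \<exists>p1\<in>P. \<exists>p2\<in>P. (\<forall>p\<in>P. x \<bullet> p \<le> x \<bullet> p1 \<and> x \<bullet> p \<le> x \<bullet> p2)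
            \<and> norm (p1 - a1) < norm (a1 - a2)/8 \<and> norm (p2 - a2) < norm (a1 - a2)/8})"
  have "negligible (\<Union> (F ` ((D \<times> D) \<inter> {(a1,a2). a1 \<noteq> a2})))"
  proof (rule negligible_countable_Union)
    show "countable (F ` (D \<times> D \<inter> {(a1, a2). a1 \<noteq> a2}))" using D(1) by (intro countable_image countable_Int1 countable_SIGMA) auto
  next
    fix T assume "T \<in> F ` (D \<times> D \<inter> {(a1, a2). a1 \<noteq> a2})"
    then obtain a1 a2 where "a1 \<noteq> a2" "T = F (a1,a2)" by auto
    then show "negligible T" using negligible_piece[of a1 a2 P] by (simp add: F_def)
  qed
  moreover have "multi_argmax P \<subseteq> \<Union> (F ` ((D \<times> D) \<inter> {(a1,a2). a1 \<noteq> a2}))"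
  proof
    fix x assume "x \<in> multi_argmax P"
    then obtain p1 p2 where p: "p1\<in>P" "p2\<in>P" "p1 \<noteq> p2" "\<forall>p\<in>P. x \<bullet> p \<le> x \<bullet> p1 \<and> x \<bullet> p \<le> x \<bullet> p2"
      unfolding multi_argmax_def by blast
    define d0 where "d0 = norm (p1 - p2)"
    have d0: "d0 > 0" using p(3) by (simp add: d0_def)
    obtain a1 where a1: "a1 \<in> D" "a1 \<in> ball p1 (d0/20)" using D(2)[of "ball p1 (d0/20)"] d0 by auto
    obtain a2 where a2: "a2 \<in> D" "a2 \<in> ball p2 (d0/20)" using D(2)[of "ball p2 (d0/20)"] d0 by auto
    have n1: "norm (p1 - a1) < d0/20" using a1 by (simp add: dist_norm)
    have n2: "norm (p2 - a2) < d0/20" using a2 by (simp add: dist_norm)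
    have "d0 \<le> norm (p1 - a1) + norm (a1 - a2) + norm (a2 - p2)"
      unfolding d0_def using norm_triangle_ineq[of "p1 - a1" "a1 - a2"] norm_triangle_ineq[of "p1 - a2" "a2 - p2"] by simp
    then have "norm (a1 - a2) \<ge> 9/10 * d0" using n1 n2 by (simp add: norm_minus_commute)
    then have "a1 \<noteq> a2" "norm (p1 - a1) < norm (a1 - a2)/8" "norm (p2 - a2) < norm (a1 - a2)/8"
      using n1 n2 d0 by (auto simp del: norm_minus_commute)
    then have "x \<in> F (a1, a2)" using p(1,2,4) unfolding F_def by auto
    then show "x \<in> \<Union> (F ` ((D \<times> D) \<inter> {(a1,a2). a1 \<noteq> a2}))"
      using a1 a2 \<open>a1 \<noteq> a2\<close> by blast
  qed
  ultimately show ?thesis using negligible_subset by blast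
qed

definition SS :: "'a::euclidean_space set set" where
  "SS = {A. A \<subseteq> sphere 0 1 \<and> unit_cone A \<in> sets lebesgue}"

definition smu :: "'a::euclidean_space set \<Rightarrow> ennreal" where
  "smu A = ennreal (real DIM('a)) * emeasure lebesgue (unit_cone A)"

lemma unit_cone_eq:
  fixes A :: "'a::euclidean_space set"
  assumes "A \<subseteq> sphere 0 1"
  shows "unit_cone A = {x. x \<noteq> 0 \<and> norm x \<le> 1 \<and> x /\<^sub>R norm x \<in> A}"
proof (intro set_eqI iffI)
  fix x assume "x \<in> unit_cone A"
  then obtain r u where x: "x = r *\<^sub>R u" "0 < r" "r \<le> 1" "u \<in> A" unfolding unit_cone_def by blast
  have nu: "norm u = 1" using assms x(4) by auto
  then show "x \<in> {x. x \<noteq> 0 \<and> norm x \<le> 1 \<and> x /\<^sub>R norm x \<in> A}" using x by auto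
next
  fix x :: 'a assume "x \<in> {x. x \<noteq> 0 \<and> norm x \<le> 1 \<and> x /\<^sub>R norm x \<in> A}"
  then show "x \<in> unit_cone A" unfolding unit_cone_def
    by (intro CollectI exI[of _ "norm x"] exI[of _ "x /\<^sub>R norm x"]) auto
qed

lemma unit_cone_Union: "unit_cone (\<Union>i. A i) = (\<Union>i. unit_cone (A i))"
  unfolding unit_cone_def by blast

lemma unit_cone_empty[simp]: "unit_cone {} = {}"
  unfolding unit_cone_def by blast

lemma unit_cone_mono: "A \<subseteq> B \<Longrightarrow> unit_cone A \<subseteq> unit_cone B"
  unfolding unit_cone_def by blast

lemma unit_cone_Int_disj:
  fixes A B :: "'a::euclidean_space set"
  assumes "A \<subseteq> sphere 0 1" "B \<subseteq> sphere 0 1" "A \<inter> B = {}"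
  shows "unit_cone A \<inter> unit_cone B = {}"
  using assms by (auto simp: unit_cone_eq)

lemma unit_cone_sphere:
  "unit_cone (sphere (0::'a::euclidean_space) 1) = cball 0 1 - {0}"
  by (auto simp: unit_cone_eq)

lemma unit_cone_sphere_leb: "unit_cone (sphere (0::'a::euclidean_space) 1) \<in> sets lebesgue"
proof -
  have "cball (0::'a) 1 - {0} \<in> sets lebesgue" by (intro sets.Diff) auto
  then show ?thesis using unit_cone_sphere by (metis)
qed

lemma unit_cone_diff:
  fixes A :: "'a::euclidean_space set"
  assumes "A \<subseteq> sphere 0 1"
  shows "unit_cone (sphere 0 1 - A) = unit_cone (sphere 0 1) - unit_cone A"
  using assms by (auto simp: unit_cone_eq)

lemma unit_cone_borel:
  fixes B :: "'a::euclidean_space set"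
  assumes "B \<in> sets borel"
  shows "unit_cone (B \<inter> sphere 0 1) \<in> sets borel"
proof -
  have m: "(\<lambda>x::'a. x /\<^sub>R norm x) \<in> borel_measurable borel" by measurable
  have "unit_cone (B \<inter> sphere 0 1) = (cball 0 1 - {0}) \<inter> (\<lambda>x::'a. x /\<^sub>R norm x) -` B"
    by (auto simp: unit_cone_eq)
  moreover have "(\<lambda>x::'a. x /\<^sub>R norm x) -` B \<in> sets borel"
    using measurable_sets_borel[OF m assms] by simp
  ultimately show ?thesis by auto
qed

lemma sigma_algebra_SS: "sigma_algebra (sphere (0::'a::euclidean_space) 1) SS"
  unfolding sigma_algebra_iff2
proof (intro conjI ballI allI impI)
  show "SS \<subseteq> Pow (sphere (0::'a) 1)" by (auto simp: SS_def)
  show "{} \<in> (SS :: 'a set set)" by (simp add: SS_def)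
  fix s :: "'a set" assume "s \<in> SS"
  then show "sphere 0 1 - s \<in> SS"
    using unit_cone_diff[of s] unit_cone_sphere_leb[where 'a='a] by (auto simp: SS_def intro!: sets.Diff)
next
  fix A :: "nat \<Rightarrow> 'a set" assume "range A \<subseteq> SS"
  then show "(\<Union>i. A i) \<in> SS" unfolding SS_def using unit_cone_Union[of A] by auto
qed

lemma ca_smu: "countably_additive (SS :: 'a::euclidean_space set set) smu"
  unfolding countably_additive_def
proof (intro allI impI)
  fix A :: "nat \<Rightarrow> 'a set" assume A: "range A \<subseteq> SS" "disjoint_family A" "\<Union> (range A) \<in> SS"
  have d: "disjoint_family (\<lambda>i. unit_cone (A i))"
    using A(1,2) unfolding disjoint_family_on_def SS_def
    by (intro ballI impI unit_cone_Int_disj) auto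
  have "(\<Sum>i. emeasure lebesgue (unit_cone (A i))) = emeasure lebesgue (\<Union>i. unit_cone (A i))"
    by (rule suminf_emeasure) (use A(1) d in \<open>auto simp: SS_def\<close>)
  then show "(\<Sum>i. smu (A i)) = smu (\<Union> (range A))"
    unfolding smu_def using unit_cone_Union[of A] by (simp add: ennreal_suminf_cmult)
qed

lemma positive_smu: "positive SS smu"
  by (simp add: positive_def smu_def)

lemma sm_eq: "(sphere_measure :: 'a::euclidean_space measure) = measure_of (sphere 0 1) SS smu"
  unfolding sphere_measure_def SS_def smu_def[abs_def] ..

lemma sphere_measure_space: "space (sphere_measure :: 'a::euclidean_space measure) = sphere 0 1"
  unfolding sphere_measure_def
  using sigma_algebra.space_measure_of_eq[OF sigma_algebra_SS] by (simp add: SS_def)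

lemma sphere_measure_sets: "sets (sphere_measure :: 'a::euclidean_space measure) = SS"
  unfolding sphere_measure_def
  using sigma_algebra.sets_measure_of_eq[OF sigma_algebra_SS] by (simp add: SS_def)

lemma sphere_measure_emeasure:
  "A \<in> SS \<Longrightarrow> emeasure (sphere_measure :: 'a::euclidean_space measure) A = smu A"
  unfolding sm_eq
  using emeasure_measure_of_sigma[OF sigma_algebra_SS positive_smu ca_smu, of A] by simp

lemma borel_Int_sphere_in:
  fixes B :: "'a::euclidean_space set"
  assumes "B \<in> sets borel"
  shows "B \<inter> sphere 0 1 \<in> sets (sphere_measure :: 'a measure)"
  unfolding sphere_measure_sets SS_def
  using unit_cone_borel[OF assms] by auto

lemma continuous_on_sphere_measurable:
  fixes g :: "'a::euclidean_space \<Rightarrow> 'b::topological_space"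
  assumes "continuous_on (sphere 0 1) g"
  shows "g \<in> borel_measurable (sphere_measure :: 'a measure)"
proof (rule borel_measurableI)
  fix O' :: "'b set" assume "open O'"
  then obtain U where U: "open U" "U \<inter> sphere 0 1 = g -` O' \<inter> sphere 0 1"
    using assms unfolding continuous_on_open_invariant by blast
  then show "g -` O' \<inter> space sphere_measure \<in> sets sphere_measure"
    using borel_Int_sphere_in[of U] by (simp add: sphere_measure_space)
qed

lemma sphere_measure_finite: "emeasure (sphere_measure :: 'a::euclidean_space measure) (sphere 0 1) < \<infinity>"
proof -
  have "sphere (0::'a) 1 \<in> SS" using unit_cone_sphere_leb[where 'a='a] by (simp add: SS_def)
  then have "emeasure (sphere_measure :: 'a measure) (sphere 0 1) = smu (sphere (0::'a) 1)"
    by (rule sphere_measure_emeasure)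
  also have "\<dots> = ennreal (real DIM('a)) * emeasure lebesgue (cball (0::'a) 1 - {0})"
    by (simp add: smu_def unit_cone_sphere)
  also have "\<dots> < \<infinity>"
  proof -
    have "emeasure lebesgue (cball (0::'a) 1 - {0}) \<le> emeasure lebesgue (cball (0::'a) 1)"
      by (rule emeasure_mono) auto
    also have "\<dots> < \<infinity>" using lmeasurable_cball[of "0::'a" 1] by (simp add: fmeasurable_def)
    finally show ?thesis by (simp add: ennreal_mult_less_top)
  qed
  finally show ?thesis .
qed

lemma finite_measure_sphere: "finite_measure (sphere_measure :: 'a::euclidean_space measure)"
  by (rule finite_measureI) (use sphere_measure_finite in \<open>simp add: sphere_measure_space less_top\<close>)

lemma sphere_null:
  fixes N :: "'a::euclidean_space set"
  assumes "N \<subseteq> sphere 0 1" "negligible (unit_cone N)"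
  shows "N \<in> null_sets (sphere_measure :: 'a measure)"
proof -
  have n: "unit_cone N \<in> null_sets lebesgue" using assms(2) negligible_iff_null_sets by blast
  then have "N \<in> SS" using assms(1) by (auto simp: SS_def)
  moreover have "smu N = 0" using null_setsD1[OF n] by (simp add: smu_def)
  ultimately show ?thesis using sphere_measure_emeasure[of N] by (simp add: sphere_measure_sets null_sets_def)
qed

lemma sphere_nonempty: "\<exists>u::'a::euclidean_space. u \<in> sphere 0 1"
proof -
  obtain b :: 'a where "b \<in> Basis" using nonempty_Basis by blast
  then show ?thesis by (intro exI[of _ b]) auto
qed

locale wulff =
  fixes \<Omega> :: "'a::euclidean_space set" and h :: "'a \<Rightarrow> real"
  assumes cpt: "compact \<Omega>" and sub: "\<Omega> \<subseteq> sphere 0 1"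
    and nohemi: "\<forall>u\<in>sphere 0 1. \<not> \<Omega> \<subseteq> closed_hemisphere u"
    and hcont: "continuous_on \<Omega> h" and hpos: "\<forall>v\<in>\<Omega>. h v > 0"
begin

definition Phi :: "'a \<Rightarrow> real" where "Phi u = Sup ((\<lambda>v. (u \<bullet> v) / h v) ` \<Omega>)"

abbreviation W where "W \<equiv> wulff_shape \<Omega> h"

lemma Omega_ne: "\<Omega> \<noteq> {}"
  using nohemi sphere_nonempty by (force simp: closed_hemisphere_def)

lemma norm_Omega: "v \<in> \<Omega> \<Longrightarrow> norm v = 1" using sub by auto

lemma cont_ratio: "continuous_on \<Omega> (\<lambda>v. (u \<bullet> v) / h v)"
  using hcont hpos by (intro continuous_intros) auto

lemma Phi_attained: "\<exists>v\<in>\<Omega>. Phi u = (u \<bullet> v) / h v"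
  and Phi_ge: "v \<in> \<Omega> \<Longrightarrow> (u \<bullet> v) / h v \<le> Phi u"
proof -
  obtain v0 where v0: "v0 \<in> \<Omega>" "\<forall>v\<in>\<Omega>. (u \<bullet> v) / h v \<le> (u \<bullet> v0) / h v0"
    using continuous_attains_sup[OF cpt Omega_ne cont_ratio[of u]] by blast
  have "Phi u = (u \<bullet> v0) / h v0" unfolding Phi_def
    by (rule cSup_eq_maximum) (use v0 in auto)
  then show "\<exists>v\<in>\<Omega>. Phi u = (u \<bullet> v) / h v" using v0 by blast
  show "v \<in> \<Omega> \<Longrightarrow> (u \<bullet> v) / h v \<le> Phi u" using v0 \<open>Phi u = _\<close> by auto
qed

lemma hmin: "\<exists>c>0. \<forall>v\<in>\<Omega>. c \<le> h v"
proof -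
  obtain v0 where v0: "v0 \<in> \<Omega>" "\<forall>v\<in>\<Omega>. h v0 \<le> h v"
    using continuous_attains_inf[OF cpt Omega_ne hcont] by blast
  then show ?thesis using hpos by (intro exI[of _ "h v0"]) auto
qed

definition cmin where "cmin = (SOME c. c > 0 \<and> (\<forall>v\<in>\<Omega>. c \<le> h v))"

lemma cmin: "cmin > 0" "v \<in> \<Omega> \<Longrightarrow> cmin \<le> h v"
  using someI_ex[OF hmin] unfolding cmin_def by auto

lemma Phi_pos: "u \<in> sphere 0 1 \<Longrightarrow> Phi u > 0"
proof -
  assume u: "u \<in> sphere 0 1"
  then have "-u \<in> sphere 0 1" by simp
  then obtain v where v: "v \<in> \<Omega>" "\<not> (v \<bullet> (-u) \<ge> 0)"
    using nohemi sub unfolding closed_hemisphere_def by blast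
  then have "(u \<bullet> v) / h v > 0" using hpos by (simp add: inner_commute)
  with Phi_ge[OF v(1), of u] show ?thesis by linarith
qed

lemma ratio_diff: "v \<in> \<Omega> \<Longrightarrow> \<bar>(u \<bullet> v) / h v - (u' \<bullet> v) / h v\<bar> \<le> norm (u - u') / cmin"
proof -
  assume v: "v \<in> \<Omega>"
  have "(u \<bullet> v) / h v - (u' \<bullet> v) / h v = ((u - u') \<bullet> v) / h v"
    by (simp add: inner_diff_left diff_divide_distrib)
  moreover have hv: "h v > 0" using hpos v by auto
  ultimately have "\<bar>(u \<bullet> v) / h v - (u' \<bullet> v) / h v\<bar> = \<bar>(u - u') \<bullet> v\<bar> / h v"
    by simp
  also have "\<dots> \<le> norm (u - u') / h v"
    using Cauchy_Schwarz_ineq2[of "u - u'" v] norm_Omega[OF v] hv by (intro divide_right_mono) auto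
  also have "\<dots> \<le> norm (u - u') / cmin"
    using cmin v hpos by (intro divide_left_mono) auto
  finally show ?thesis .
qed

lemma Phi_lip: "\<bar>Phi u - Phi u'\<bar> \<le> norm (u - u') / cmin"
proof -
  have "Phi u \<le> Phi u' + norm (u - u') / cmin" for u u'
  proof -
    obtain v where v: "v \<in> \<Omega>" "Phi u = (u \<bullet> v) / h v" using Phi_attained by blast
    have "(u \<bullet> v) / h v \<le> (u' \<bullet> v) / h v + norm (u - u') / cmin" using ratio_diff[OF v(1), of u u'] by linarith
    with Phi_ge[OF v(1), of u'] v(2) show ?thesis by linarith
  qed
  from this[of u u'] this[of u' u] show ?thesis by (simp add: norm_minus_commute abs_le_iff)
qed

lemma Phi_cont: "continuous_on A Phi"
proof (rule continuous_on_subset[of UNIV])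
  show "continuous_on UNIV Phi"
    unfolding continuous_on_iff
  proof (intro ballI allI impI)
    fix x :: 'a and e :: real assume "e > 0"
    show "\<exists>d>0. \<forall>x'\<in>UNIV. dist x' x < d \<longrightarrow> dist (Phi x') (Phi x) < e"
    proof (intro exI[of _ "e * cmin"] conjI ballI impI)
      show "0 < e * cmin" using \<open>e>0\<close> cmin by simp
      fix x' assume "dist x' x < e * cmin"
      then have "norm (x' - x) / cmin < e" using cmin by (simp add: dist_norm divide_less_eq mult.commute)
      then show "dist (Phi x') (Phi x) < e" using Phi_lip[of x' x] by (simp add: dist_real_def)
    qed
  qed
qed simp

lemma mem_W: "s \<ge> 0 \<Longrightarrow> (s *\<^sub>R u \<in> W \<longleftrightarrow> s * Phi u \<le> 1)"
proof -
  assume s: "s \<ge> 0"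
  have "s *\<^sub>R u \<in> W \<longleftrightarrow> (\<forall>v\<in>\<Omega>. s * ((u \<bullet> v) / h v) \<le> 1)"
    unfolding wulff_shape_def using hpos by (auto simp: field_simps)
  also have "\<dots> \<longleftrightarrow> s * Phi u \<le> 1"
  proof
    assume "\<forall>v\<in>\<Omega>. s * ((u \<bullet> v) / h v) \<le> 1"
    then show "s * Phi u \<le> 1" using Phi_attained[of u] by auto
  next
    assume "s * Phi u \<le> 1"
    then show "\<forall>v\<in>\<Omega>. s * ((u \<bullet> v) / h v) \<le> 1"
      using Phi_ge s by (meson mult_left_mono order_trans)
  qed
  finally show ?thesis .
qed

lemma radial_W: "u \<in> sphere 0 1 \<Longrightarrow> radial_fun W u = 1 / Phi u"
proof -
  assume u: "u \<in> sphere 0 1"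
  have P: "Phi u > 0" using Phi_pos[OF u] .
  have "{s. 0 \<le> s \<and> s *\<^sub>R u \<in> W} = {0 .. 1 / Phi u}"
    using mem_W P by (auto simp: field_simps)
  then show ?thesis unfolding radial_fun_def using P by simp
qed

lemma rho_in_W: "u \<in> sphere 0 1 \<Longrightarrow> radial_fun W u *\<^sub>R u \<in> W"
proof -
  assume u: "u \<in> sphere 0 1"
  have P: "Phi u > 0" using Phi_pos[OF u] .
  have "(1 / Phi u) *\<^sub>R u \<in> W" using mem_W[of "1 / Phi u" u] P by simp
  then show ?thesis using radial_W[OF u] by simp
qed

lemma radial_pos: "u \<in> sphere 0 1 \<Longrightarrow> radial_fun W u > 0"
  using radial_W Phi_pos by simp

lemma ball_W: "cball 0 cmin \<subseteq> W"
proof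
  fix x :: 'a assume x: "x \<in> cball 0 cmin"
  have "x \<bullet> v \<le> h v" if "v \<in> \<Omega>" for v
  proof -
    have "x \<bullet> v \<le> norm x * norm v" by (rule norm_cauchy_schwarz)
    also have "\<dots> \<le> cmin" using x norm_Omega[OF that] by simp
    finally show ?thesis using cmin(2)[OF that] by linarith
  qed
  then show "x \<in> W" by (simp add: wulff_shape_def)
qed

lemma W_bounded: "\<exists>R. \<forall>x\<in>W. norm x \<le> R"
proof -
  have cs: "compact (sphere (0::'a) 1)" "sphere (0::'a) 1 \<noteq> {}" using sphere_nonempty by auto
  obtain u0 where u0: "u0 \<in> sphere 0 1" "\<forall>u\<in>sphere 0 1. Phi u0 \<le> Phi u"
    using continuous_attains_inf[OF cs Phi_cont] by blast
  have m: "Phi u0 > 0" using Phi_pos[OF u0(1)] .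
  have "norm x \<le> 1 / Phi u0" if "x \<in> W" for x
  proof (cases "x = 0")
    case False
    define u where "u = x /\<^sub>R norm x"
    have u: "u \<in> sphere 0 1" using False by (simp add: u_def)
    have "x = norm x *\<^sub>R u" using False by (simp add: u_def)
    then have "norm x * Phi u \<le> 1" using mem_W[of "norm x" u] that by simp
    moreover have "norm x * Phi u0 \<le> norm x * Phi u" using u0(2) u by (simp add: mult_left_mono)
    ultimately show ?thesis using m by (simp add: field_simps)
  qed (use m in simp)
  then show ?thesis by blast
qed

lemma supp_upper: "y \<in> W \<Longrightarrow> y \<bullet> v \<le> support_fun W v"
proof -
  assume y: "y \<in> W"
  obtain R where R: "\<forall>x\<in>W. norm x \<le> R" using W_bounded by blast
  have b: "bdd_above {x \<bullet> v |x. x \<in> W}"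
  proof (rule bdd_aboveI[of _ "R * norm v"])
    fix z assume "z \<in> {x \<bullet> v |x. x \<in> W}"
    then obtain x where x: "x \<in> W" "z = x \<bullet> v" by blast
    have "x \<bullet> v \<le> norm x * norm v" by (rule norm_cauchy_schwarz)
    also have "\<dots> \<le> R * norm v" using R x(1) by (simp add: mult_right_mono)
    finally show "z \<le> R * norm v" using x(2) by simp
  qed
  show ?thesis unfolding support_fun_def by (rule cSup_upper[OF _ b]) (use y in auto)
qed

lemma supp_le_h: "v \<in> \<Omega> \<Longrightarrow> support_fun W v \<le> h v"
  unfolding support_fun_def
proof (rule cSup_least)
  show "{x \<bullet> v |x. x \<in> W} \<noteq> {}" using ball_W cmin(1) by auto
qed (auto simp: wulff_shape_def)

lemma supp_pos: "v \<in> sphere 0 1 \<Longrightarrow> support_fun W v \<ge> cmin"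
proof -
  assume v: "v \<in> sphere 0 1"
  have "cmin *\<^sub>R v \<in> W" using ball_W v cmin by (auto simp: subset_iff)
  then have "(cmin *\<^sub>R v) \<bullet> v \<le> support_fun W v" by (rule supp_upper)
  then show ?thesis using v by (simp add: inner_scaleR_left power2_norm_eq_inner[symmetric])
qed

definition Nrm where "Nrm u = {v \<in> sphere 0 1. radial_fun W u * (u \<bullet> v) = support_fun W v}"
definition Amax where "Amax u = {v \<in> \<Omega>. (u \<bullet> v) / h v = Phi u}"

lemma Amax_ne: "Amax u \<noteq> {}"
proof -
  obtain v where "v \<in> \<Omega>" "Phi u = (u \<bullet> v) / h v" using Phi_attained by blast
  then show ?thesis unfolding Amax_def by auto
qed

lemma Amax_Nrm: "u \<in> sphere 0 1 \<Longrightarrow> Amax u \<subseteq> Nrm u"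
proof
  fix v assume u: "u \<in> sphere 0 1" and v: "v \<in> Amax u"
  have vO: "v \<in> \<Omega>" and eq: "(u \<bullet> v) / h v = Phi u" using v by (auto simp: Amax_def)
  have hv: "h v > 0" using hpos vO by auto
  have "u \<bullet> v = Phi u * h v" using eq hv by (simp add: divide_eq_eq)
  then have "radial_fun W u * (u \<bullet> v) = h v"
    using radial_W[OF u] Phi_pos[OF u] hv by simp
  moreover have "(radial_fun W u *\<^sub>R u) \<bullet> v \<le> support_fun W v" by (rule supp_upper[OF rho_in_W[OF u]])
  moreover note supp_le_h[OF vO]
  ultimately show "v \<in> Nrm u" using vO sub by (auto simp: Nrm_def)
qed

definition Bad where "Bad = {u \<in> sphere 0 1. \<exists>v1\<in>Nrm u. \<exists>v2\<in>Nrm u. v1 \<noteq> v2}"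

lemma Bad_negligible: "negligible (unit_cone Bad)"
proof -
  define P where "P = (\<lambda>v. v /\<^sub>R support_fun W v) ` sphere 0 1"
  have "unit_cone Bad \<subseteq> multi_argmax P"
  proof
    fix x assume "x \<in> unit_cone Bad"
    then obtain r u where x: "x = r *\<^sub>R u" "0 < r" "u \<in> Bad" unfolding unit_cone_def by blast
    then obtain v1 v2 where v: "v1 \<in> Nrm u" "v2 \<in> Nrm u" "v1 \<noteq> v2" and u: "u \<in> sphere 0 1"
      unfolding Bad_def by blast
    define \<rho> where "\<rho> = radial_fun W u"
    have rp: "\<rho> > 0" using radial_pos[OF u] by (simp add: \<rho>_def)
    have key: "x \<bullet> (v /\<^sub>R support_fun W v) = (r / \<rho>) * (\<rho> * (u \<bullet> v) / support_fun W v)" for v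
    proof -
      have "x \<bullet> (v /\<^sub>R support_fun W v) = inverse (support_fun W v) * (r * (u \<bullet> v))"
        by (simp add: x inner_scaleR_right inner_scaleR_left)
      also have "\<dots> = r * (u \<bullet> v) / support_fun W v" by (simp add: divide_inverse)
      finally show ?thesis using rp by simp
    qed
    have le: "x \<bullet> p \<le> r / \<rho>" if "p \<in> P" for p
    proof -
      obtain v where v: "v \<in> sphere 0 1" "p = v /\<^sub>R support_fun W v" using \<open>p \<in> P\<close> P_def by blast
      have hp: "support_fun W v > 0" using supp_pos[OF v(1)] cmin by linarith
      have "(\<rho> *\<^sub>R u) \<bullet> v \<le> support_fun W v" unfolding \<rho>_def by (rule supp_upper[OF rho_in_W[OF u]])
      then have "\<rho> * (u \<bullet> v) / support_fun W v \<le> 1" using hp by (simp add: divide_le_eq)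
      then show ?thesis unfolding v(2) key using rp x(2) by (intro mult_left_le) auto
    qed
    have eqv: "x \<bullet> (v /\<^sub>R support_fun W v) = r / \<rho>" if "v \<in> Nrm u" for v
    proof -
      have vs: "v \<in> sphere 0 1" and e: "\<rho> * (u \<bullet> v) = support_fun W v" using that by (auto simp: Nrm_def \<rho>_def)
      have hp: "support_fun W v > 0" using supp_pos[OF vs] cmin by linarith
      show ?thesis unfolding key using e hp by simp
    qed
    have inP: "v /\<^sub>R support_fun W v \<in> P" if "v \<in> Nrm u" for v using that by (auto simp: P_def Nrm_def)
    have neq: "v1 /\<^sub>R support_fun W v1 \<noteq> v2 /\<^sub>R support_fun W v2"
    proof
      assume e: "v1 /\<^sub>R support_fun W v1 = v2 /\<^sub>R support_fun W v2"
      have s: "v1 \<in> sphere 0 1" "v2 \<in> sphere 0 1" using v by (auto simp: Nrm_def)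
      have hp: "support_fun W v1 > 0" "support_fun W v2 > 0" using supp_pos s cmin by (metis less_le_trans)+
      from arg_cong[OF e, of norm] have "1 / support_fun W v1 = 1 / support_fun W v2" using s hp by simp
      then have "support_fun W v1 = support_fun W v2" by simp
      with e hp have "v1 = v2" by simp
      with v(3) show False by simp
    qed
    have "\<forall>p\<in>P. x \<bullet> p \<le> x \<bullet> (v1 /\<^sub>R support_fun W v1) \<and> x \<bullet> p \<le> x \<bullet> (v2 /\<^sub>R support_fun W v2)"
      using le eqv[OF v(1)] eqv[OF v(2)] by simp
    then show "x \<in> multi_argmax P" unfolding multi_argmax_def
      using inP[OF v(1)] inP[OF v(2)] neq by blast
  qed
  then show ?thesis using negligible_multi_argmax negligible_subset by blast
qed

lemma Nrm_single: "u \<in> sphere 0 1 \<Longrightarrow> u \<notin> Bad \<Longrightarrow> v \<in> Amax u \<Longrightarrow> Nrm u = {v} \<and> Amax u = {v}"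
  using Amax_Nrm[of u] unfolding Bad_def by blast

end

lemma gap:
  fixes \<phi> :: "'a::topological_space \<Rightarrow> real"
  assumes "compact K" "continuous_on K \<phi>" "\<forall>v\<in>K. \<phi> v < m"
  shows "\<exists>\<gamma>>0. \<forall>v\<in>K. \<phi> v \<le> m - \<gamma>"
proof (cases "K = {}")
  case True then show ?thesis by (intro exI[of _ 1]) auto
next
  case False
  obtain v0 where v0: "v0 \<in> K" "\<forall>v\<in>K. \<phi> v \<le> \<phi> v0"
    using continuous_attains_sup[OF assms(1) False assms(2)] by blast
  show ?thesis using v0 assms(3) by (intro exI[of _ "m - \<phi> v0"]) auto
qed

locale lfam =
  fixes \<Omega> :: "'a::euclidean_space set" and h :: "real \<Rightarrow> 'a \<Rightarrow> real" and f :: "'a \<Rightarrow> real"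
    and \<delta> :: real and e :: "real \<Rightarrow> 'a \<Rightarrow> real"
  assumes cpt: "compact \<Omega>" and sub: "\<Omega> \<subseteq> sphere 0 1"
    and nohemi: "\<forall>u\<in>sphere 0 1. \<not> \<Omega> \<subseteq> closed_hemisphere u"
    and fcont: "continuous_on \<Omega> f"
    and dpos: "\<delta> > 0"
    and fam: "\<And>t. t \<in> {-\<delta><..<\<delta>} \<Longrightarrow> continuous_on \<Omega> (h t) \<and> (\<forall>v\<in>\<Omega>. h t v > 0)
         \<and> (\<forall>v\<in>\<Omega>. ln (h t v) = ln (h 0 v) + t * f v + e t v)"
    and ulim: "uniform_limit \<Omega> (\<lambda>t v. e t v / t) (\<lambda>v. 0) (at 0)"
begin

lemma wt: "\<bar>t\<bar> < \<delta> \<Longrightarrow> wulff \<Omega> (h t)"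
proof -
  assume "\<bar>t\<bar> < \<delta>"
  then have "t \<in> {-\<delta><..<\<delta>}" by auto
  from fam[OF this] show ?thesis by unfold_locales (use cpt sub nohemi in auto)
qed

lemma w0: "wulff \<Omega> (h 0)" using wt dpos by simp

definition k where "k t v = t * f v + e t v"

lemma h_rel: "\<bar>t\<bar> < \<delta> \<Longrightarrow> v \<in> \<Omega> \<Longrightarrow> h t v = h 0 v * exp (k t v)"
proof -
  assume t: "\<bar>t\<bar> < \<delta>" and v: "v \<in> \<Omega>"
  have ti: "t \<in> {-\<delta><..<\<delta>}" using t by auto
  have p: "h t v > 0" "h 0 v > 0" using fam[OF ti] fam[of 0] v dpos by auto
  have "ln (h t v) = ln (h 0 v) + t * f v + e t v" using fam[OF ti] v by blast
  then have "ln (h t v) = ln (h 0 v) + k t v" by (simp add: k_def algebra_simps)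
  then have "exp (ln (h t v)) = exp (ln (h 0 v)) * exp (k t v)" by (simp add: exp_add)
  then show ?thesis using p by simp
qed

lemma ratio_rel: "\<bar>t\<bar> < \<delta> \<Longrightarrow> v \<in> \<Omega> \<Longrightarrow> (u \<bullet> v) / h t v = ((u \<bullet> v) / h 0 v) * exp (- k t v)"
proof -
  assume t: "\<bar>t\<bar> < \<delta>" and v: "v \<in> \<Omega>"
  have p: "h 0 v > 0" using fam[of 0] dpos v by auto
  show ?thesis unfolding h_rel[OF t v] using p by (simp add: exp_minus divide_inverse)
qed

lemma fbound: "\<exists>F. F \<ge> 0 \<and> (\<forall>v\<in>\<Omega>. \<bar>f v\<bar> \<le> F)"
proof -
  obtain F where "\<forall>v\<in>\<Omega>. norm (f v) \<le> F"
    using compact_imp_bounded[OF compact_continuous_image[OF fcont cpt]] unfolding bounded_iff by auto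
  then show ?thesis by (intro exI[of _ "\<bar>F\<bar>"]) auto
qed

definition FF where "FF = (SOME F. F \<ge> 0 \<and> (\<forall>v\<in>\<Omega>. \<bar>f v\<bar> \<le> F))"
lemma FF: "FF \<ge> 0" "v \<in> \<Omega> \<Longrightarrow> \<bar>f v\<bar> \<le> FF"
  using someI_ex[OF fbound] unfolding FF_def by auto

abbreviation Ph where "Ph t \<equiv> wulff.Phi \<Omega> (h t)"

lemma Phi_bracket:
  assumes t: "\<bar>t\<bar> < \<delta>" and K: "\<forall>v\<in>\<Omega>. \<bar>k t v\<bar> \<le> K" and u: "u \<in> sphere 0 1"
  shows "Ph 0 u * exp (- K) \<le> Ph t u" "Ph t u \<le> Ph 0 u * exp K"
proof -
  interpret W0: wulff \<Omega> "h 0" by (rule w0)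
  interpret Wt: wulff \<Omega> "h t" by (rule wt[OF t])
  obtain a where a: "a \<in> \<Omega>" "Ph 0 u = (u \<bullet> a) / h 0 a" using W0.Phi_attained by blast
  obtain b where b: "b \<in> \<Omega>" "Ph t u = (u \<bullet> b) / h t b" using Wt.Phi_attained by blast
  have P0: "Ph 0 u > 0" using W0.Phi_pos[OF u] .
  have Pt: "Ph t u > 0" using Wt.Phi_pos[OF u] .
  have "Ph 0 u * exp (- K) \<le> Ph 0 u * exp (- k t a)"
    using K a(1) P0 by (intro mult_left_mono) auto
  also have "\<dots> = (u \<bullet> a) / h t a" using ratio_rel[OF t a(1)] a(2) by simp
  also have "\<dots> \<le> Ph t u" by (rule Wt.Phi_ge[OF a(1)])
  finally show "Ph 0 u * exp (- K) \<le> Ph t u" .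
  have "0 < ((u \<bullet> b) / h 0 b) * exp (- k t b)" using Pt b ratio_rel[OF t b(1), of u] by simp
  then have r0: "(u \<bullet> b) / h 0 b > 0" by (metis exp_gt_zero zero_less_mult_pos2)
  have "Ph t u = ((u \<bullet> b) / h 0 b) * exp (- k t b)" using ratio_rel[OF t b(1)] b(2) by simp
  also have "\<dots> \<le> Ph 0 u * exp (- k t b)" using W0.Phi_ge[OF b(1)] by (intro mult_right_mono) auto
  also have "\<dots> \<le> Ph 0 u * exp K" using K b(1) P0 by (intro mult_left_mono) auto
  finally show "Ph t u \<le> Ph 0 u * exp K" .
qed

lemma lnPhi_bound:
  assumes t: "\<bar>t\<bar> < \<delta>" and K: "\<forall>v\<in>\<Omega>. \<bar>k t v\<bar> \<le> K" and u: "u \<in> sphere 0 1"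
  shows "\<bar>ln (Ph t u) - ln (Ph 0 u)\<bar> \<le> K"
proof -
  interpret W0: wulff \<Omega> "h 0" by (rule w0)
  have P0: "Ph 0 u > 0" using W0.Phi_pos[OF u] .
  note B = Phi_bracket[OF t K u]
  have "0 < Ph 0 u * exp (- K)" using P0 by simp
  then have Pt: "Ph t u > 0" using B(1) by linarith
  have "ln (Ph 0 u * exp (- K)) \<le> ln (Ph t u)" using B(1) P0 Pt by (subst ln_le_cancel_iff) auto
  moreover have "ln (Ph t u) \<le> ln (Ph 0 u * exp K)" using B(2) P0 Pt by (subst ln_le_cancel_iff) auto
  ultimately show ?thesis using P0 by (simp add: ln_mult)
qed

lemma k_small:
  assumes "\<eta> > 0"
  shows "eventually (\<lambda>t. \<bar>t\<bar> < \<delta> \<and> (\<forall>v\<in>\<Omega>. \<bar>e t v / t\<bar> < \<eta>) \<and> (\<forall>v\<in>\<Omega>. \<bar>k t v\<bar> \<le> \<bar>t\<bar> * (FF + \<eta>))) (at 0)"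
proof -
  have "\<forall>\<epsilon>>0. \<forall>\<^sub>F t in at 0. \<forall>v\<in>\<Omega>. dist (e t v / t) 0 < \<epsilon>"
    using ulim unfolding uniform_limit_iff .
  then have "\<forall>\<^sub>F t in at 0. \<forall>v\<in>\<Omega>. dist (e t v / t) 0 < \<eta>" using assms by blast
  then have e1: "eventually (\<lambda>t. \<forall>v\<in>\<Omega>. \<bar>e t v / t\<bar> < \<eta>) (at (0::real))"
    by (rule eventually_mono) (simp add: dist_real_def)
  have "eventually (\<lambda>t. dist t 0 < \<delta>) (at (0::real))"
    by (rule tendstoD[OF tendsto_ident_at dpos])
  then have e2: "eventually (\<lambda>t. \<bar>t\<bar> < \<delta>) (at (0::real))"
    by (rule eventually_mono) (simp add: dist_real_def)
  have e3: "eventually (\<lambda>t::real. t \<noteq> 0) (at 0)" by (rule eventually_neq_at_within)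
  show ?thesis using e1 e2 e3
  proof eventually_elim
    case (elim t)
    have "\<bar>k t v\<bar> \<le> \<bar>t\<bar> * (FF + \<eta>)" if v: "v \<in> \<Omega>" for v
    proof -
      have "\<bar>e t v\<bar> = \<bar>t\<bar> * \<bar>e t v / t\<bar>" using elim(3) by simp
      also have "\<dots> \<le> \<bar>t\<bar> * \<eta>" using elim(1) v by (intro mult_left_mono) auto
      finally have "\<bar>e t v\<bar> \<le> \<bar>t\<bar> * \<eta>" .
      moreover have "\<bar>t * f v\<bar> \<le> \<bar>t\<bar> * FF" using FF(2)[OF v] by (simp add: abs_mult mult_left_mono)
      moreover have "\<bar>k t v\<bar> \<le> \<bar>t * f v\<bar> + \<bar>e t v\<bar>" unfolding k_def by (rule abs_triangle_ineq)
      moreover have "\<bar>t\<bar> * (FF + \<eta>) = \<bar>t\<bar> * FF + \<bar>t\<bar> * \<eta>" by (simp add: distrib_left)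
      ultimately show ?thesis by linarith
    qed
    then show ?case using elim by auto
  qed
qed

end

context lfam begin

lemma deriv_good:
  assumes u: "u \<in> sphere 0 1" and A: "wulff.Amax \<Omega> (h 0) u = {a}"
  shows "((\<lambda>t. (ln (Ph 0 u) - ln (Ph t u)) / t) \<longlongrightarrow> f a) (at 0)"
proof -
  interpret W0: wulff \<Omega> "h 0" by (rule w0)
  define \<phi> where "\<phi> v = (u \<bullet> v) / h 0 v" for v
  define m where "m = Ph 0 u"
  have mpos: "m > 0" using W0.Phi_pos[OF u] by (simp add: m_def)
  have aA: "a \<in> W0.Amax u" using A by simp
  have aO: "a \<in> \<Omega>" and pa: "\<phi> a = m" using aA by (auto simp: W0.Amax_def \<phi>_def m_def)
  have phi_le: "v \<in> \<Omega> \<Longrightarrow> \<phi> v \<le> m" for v using W0.Phi_ge by (simp add: \<phi>_def m_def)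
  show ?thesis unfolding tendsto_iff
  proof (intro allI impI)
    fix \<epsilon> :: real assume \<epsilon>: "\<epsilon> > 0"
    define K where "K = \<Omega> \<inter> f -` {y. \<epsilon>/2 \<le> \<bar>y - f a\<bar>}"
    have clC: "closed {y::real. \<epsilon>/2 \<le> \<bar>y - f a\<bar>}"
      by (rule closed_Collect_le) (intro continuous_intros)+
    have clK: "closed K" unfolding K_def
      by (rule continuous_closed_preimage[OF fcont compact_imp_closed[OF cpt] clC])
    have cK: "compact K" using compact_Int_closed[OF cpt clK] by (simp add: K_def Int_absorb1)
    have "\<forall>v\<in>K. \<phi> v < m"
    proof
      fix v assume v: "v \<in> K"
      then have vO: "v \<in> \<Omega>" and fv: "\<epsilon>/2 \<le> \<bar>f v - f a\<bar>" by (auto simp: K_def)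
      have "v \<noteq> a" using fv \<epsilon> by auto
      then have "v \<notin> W0.Amax u" using A by simp
      then have "\<phi> v \<noteq> m" using vO by (simp add: W0.Amax_def \<phi>_def m_def)
      then show "\<phi> v < m" using phi_le[OF vO] by simp
    qed
    moreover have "continuous_on K \<phi>" unfolding \<phi>_def
      by (rule continuous_on_subset[OF W0.cont_ratio]) (auto simp: K_def)
    ultimately obtain \<gamma> where \<gamma>: "\<gamma> > 0" "\<forall>v\<in>K. \<phi> v \<le> m - \<gamma>" using gap[OF cK] by blast
    define \<eta> where "\<eta> = min (\<epsilon>/2) 1"
    have \<eta>: "\<eta> > 0" "\<eta> \<le> \<epsilon>/2" "\<eta> \<le> 1" using \<epsilon> by (auto simp: \<eta>_def)
    define c where "c = \<gamma> / (2 * m * (FF + 1))"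
    have cpos: "c > 0" using \<gamma> mpos FF(1) by (simp add: c_def)
    have ev1: "eventually (\<lambda>t. \<bar>t\<bar> < \<delta> \<and> (\<forall>v\<in>\<Omega>. \<bar>e t v / t\<bar> < \<eta>) \<and> (\<forall>v\<in>\<Omega>. \<bar>k t v\<bar> \<le> \<bar>t\<bar> * (FF + \<eta>))) (at 0)"
      by (rule k_small[OF \<eta>(1)])
    have "eventually (\<lambda>t. dist t 0 < c) (at (0::real))"
      by (rule tendstoD[OF tendsto_ident_at cpos])
    then have ev2: "eventually (\<lambda>t. \<bar>t\<bar> < c) (at (0::real))"
      by (rule eventually_mono) (simp add: dist_real_def)
    have ev3: "eventually (\<lambda>t::real. t \<noteq> 0) (at 0)" by (rule eventually_neq_at_within)
    show "eventually (\<lambda>t. dist ((ln (Ph 0 u) - ln (Ph t u)) / t) (f a) < \<epsilon>) (at 0)"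
      using ev1 ev2 ev3
    proof eventually_elim
      case (elim t)
      have t: "\<bar>t\<bar> < \<delta>" and eb: "\<forall>v\<in>\<Omega>. \<bar>e t v / t\<bar> < \<eta>"
        and kb: "\<forall>v\<in>\<Omega>. \<bar>k t v\<bar> \<le> \<bar>t\<bar> * (FF + \<eta>)" and tc: "\<bar>t\<bar> < c" and t0: "t \<noteq> 0"
        using elim by auto
      interpret Wt: wulff \<Omega> "h t" by (rule wt[OF t])
      obtain b where b: "b \<in> \<Omega>" "Ph t u = (u \<bullet> b) / h t b" using Wt.Phi_attained by blast
      have Pt: "Ph t u > 0" using Wt.Phi_pos[OF u] .
      have rb: "(u \<bullet> b) / h t b = \<phi> b * exp (- k t b)" using ratio_rel[OF t b(1)] by (simp add: \<phi>_def)
      have ra: "(u \<bullet> a) / h t a = m * exp (- k t a)" using ratio_rel[OF t aO, of u] pa unfolding \<phi>_def by (simp only:)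
      have lowP: "m * exp (- k t a) \<le> Ph t u" using Wt.Phi_ge[OF aO, of u] ra by simp
      have eqP: "Ph t u = \<phi> b * exp (- k t b)" using b(2) rb by simp
      have pb: "\<phi> b > 0" using Pt eqP by (metis exp_gt_zero zero_less_mult_pos2)
      have upP: "Ph t u \<le> m * exp (- k t b)" using eqP phi_le[OF b(1)] by (simp add: mult_right_mono)
      define D where "D = ln (Ph 0 u) - ln (Ph t u)"
      have lnm: "ln (Ph 0 u) = ln m" by (simp add: m_def)
      have D1: "D \<le> k t a"
      proof -
        have "ln (m * exp (- k t a)) \<le> ln (Ph t u)" using lowP mpos Pt by (subst ln_le_cancel_iff) auto
        then show ?thesis using mpos by (simp add: D_def lnm ln_mult)
      qed
      have D2: "k t b \<le> D"
      proof -
        have "ln (Ph t u) \<le> ln (m * exp (- k t b))" using upP mpos Pt by (subst ln_le_cancel_iff) auto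
        then show ?thesis using mpos by (simp add: D_def lnm ln_mult)
      qed
      have "\<phi> b * exp (- k t b) \<ge> m * exp (- k t a)" using lowP eqP by simp
      then have "\<phi> b * exp (- k t b) * exp (k t b) \<ge> m * exp (- k t a) * exp (k t b)"
        by (rule mult_right_mono) simp
      moreover have "\<phi> b * exp (- k t b) * exp (k t b) = \<phi> b"
        by (simp add: mult.assoc exp_add[symmetric])
      moreover have "m * exp (- k t a) * exp (k t b) = m * exp (k t b - k t a)"
        by (simp add: mult.assoc exp_add[symmetric])
      ultimately have pbm: "\<phi> b \<ge> m * exp (k t b - k t a)" by simp
      have "exp (k t b - k t a) \<ge> 1 + (k t b - k t a)" by (rule exp_ge_add_one_self)
      moreover have "\<bar>t\<bar> * (FF + \<eta>) \<le> \<bar>t\<bar> * (FF + 1)"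
        using \<eta>(3) by (intro mult_left_mono) auto
      moreover have "\<bar>k t b\<bar> \<le> \<bar>t\<bar> * (FF + \<eta>)" "\<bar>k t a\<bar> \<le> \<bar>t\<bar> * (FF + \<eta>)"
        using kb b(1) aO by blast+
      ultimately have "exp (k t b - k t a) \<ge> 1 - 2 * \<bar>t\<bar> * (FF + 1)" by linarith
      then have "m * (1 - 2 * \<bar>t\<bar> * (FF + 1)) \<le> m * exp (k t b - k t a)"
        using mpos by (intro mult_left_mono) auto
      then have "\<phi> b \<ge> m * (1 - 2 * \<bar>t\<bar> * (FF + 1))" using pbm by linarith
      moreover have "2 * \<bar>t\<bar> * (FF + 1) * m < \<gamma>"
      proof -
        have "2 * \<bar>t\<bar> * (FF + 1) * m < 2 * c * (FF + 1) * m"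
          using tc mpos FF(1) by (intro mult_strict_right_mono) auto
        also have "\<dots> = \<gamma>" using mpos FF(1) by (simp add: c_def)
        finally show ?thesis .
      qed
      moreover have "m * (1 - 2 * \<bar>t\<bar> * (FF + 1)) = m - 2 * \<bar>t\<bar> * (FF + 1) * m"
        by (simp add: algebra_simps)
      ultimately have "\<phi> b > m - \<gamma>" by linarith
      then have "b \<notin> K" using \<gamma>(2) by (meson not_le)
      then have fb: "\<bar>f b - f a\<bar> < \<epsilon>/2" using b(1) by (auto simp: K_def)
      have kdiv: "k t v / t = f v + e t v / t" for v using t0 by (simp add: k_def add_divide_distrib)
      have ea: "\<bar>e t a / t\<bar> < \<eta>" and ebb: "\<bar>e t b / t\<bar> < \<eta>" using eb aO b(1) by auto
      note ea' = ea[unfolded abs_less_iff] and ebb' = ebb[unfolded abs_less_iff] and fb' = fb[unfolded abs_less_iff]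
      have "\<bar>D / t - f a\<bar> < \<epsilon>"
      proof (cases "t > 0")
        case True
        have "D / t \<le> k t a / t" using D1 True by (simp add: divide_right_mono)
        moreover have "k t b / t \<le> D / t" using D2 True by (simp add: divide_right_mono)
        ultimately show ?thesis unfolding abs_less_iff using kdiv[of a] kdiv[of b] ea' ebb' fb' \<eta>(2) by linarith
      next
        case False
        then have tn: "t < 0" using t0 by simp
        have "k t a / t \<le> D / t" using D1 tn by (simp add: divide_right_mono_neg)
        moreover have "D / t \<le> k t b / t" using D2 tn by (simp add: divide_right_mono_neg)
        ultimately show ?thesis unfolding abs_less_iff using kdiv[of a] kdiv[of b] ea' ebb' fb' \<eta>(2) by linarith
      qed
      then show ?case by (simp add: D_def dist_real_def)
    qed
  qed
qed

end

context wulff begin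

definition alpha where "alpha u = (SOME v. v \<in> Amax u)"

lemma alpha_A: "alpha u \<in> Amax u"
  unfolding alpha_def using Amax_ne[of u] by (simp add: some_in_eq)

lemma alpha_O: "alpha u \<in> \<Omega>" using alpha_A by (simp add: Amax_def)

lemma alpha_good: "u \<in> sphere 0 1 \<Longrightarrow> u \<notin> Bad \<Longrightarrow> Amax u = {alpha u} \<and> Nrm u = {alpha u}"
  using Nrm_single alpha_A by blast

lemma alpha_cont: "continuous_on (sphere 0 1 - Bad) alpha"
  unfolding continuous_on_iff
proof (intro ballI allI impI)
  fix u and \<epsilon> :: real assume u: "u \<in> sphere 0 1 - Bad" and \<epsilon>: "\<epsilon> > 0"
  define a where "a = alpha u"
  have A: "Amax u = {a}" using alpha_good u by (simp add: a_def)
  define K where "K = \<Omega> \<inter> - ball a \<epsilon>"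
  have cK: "compact K" unfolding K_def by (rule compact_Int_closed[OF cpt]) auto
  have "\<forall>v\<in>K. (u \<bullet> v) / h v < Phi u"
  proof
    fix v assume v: "v \<in> K"
    then have vO: "v \<in> \<Omega>" and "v \<noteq> a" using \<epsilon> by (auto simp: K_def)
    then have "v \<notin> Amax u" using A by simp
    then have "(u \<bullet> v) / h v \<noteq> Phi u" using vO by (simp add: Amax_def)
    then show "(u \<bullet> v) / h v < Phi u" using Phi_ge[OF vO, of u] by simp
  qed
  moreover have "continuous_on K (\<lambda>v. (u \<bullet> v) / h v)"
    by (rule continuous_on_subset[OF cont_ratio]) (auto simp: K_def)
  ultimately obtain \<gamma> where \<gamma>: "\<gamma> > 0" "\<forall>v\<in>K. (u \<bullet> v) / h v \<le> Phi u - \<gamma>" using gap[OF cK] by blast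
  show "\<exists>d>0. \<forall>u'\<in>sphere 0 1 - Bad. dist u' u < d \<longrightarrow> dist (alpha u') (alpha u) < \<epsilon>"
  proof (intro exI[of _ "\<gamma> * cmin / 2"] conjI ballI impI)
    show "0 < \<gamma> * cmin / 2" using \<gamma> cmin by simp
    fix u' assume u': "u' \<in> sphere 0 1 - Bad" and d: "dist u' u < \<gamma> * cmin / 2"
    define b where "b = alpha u'"
    have bO: "b \<in> \<Omega>" using alpha_O by (simp add: b_def)
    have aO: "a \<in> \<Omega>" using alpha_O by (simp add: a_def)
    have nd: "norm (u - u') / cmin < \<gamma> / 2"
      using d cmin by (simp add: dist_norm divide_less_eq norm_minus_commute)
    have bmax: "(u' \<bullet> b) / h b = Phi u'" using alpha_A[of u'] by (simp add: b_def Amax_def)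
    have amax: "(u \<bullet> a) / h a = Phi u" using alpha_A[of u] by (simp add: a_def Amax_def)
    have "(u' \<bullet> a) / h a \<le> Phi u'" by (rule Phi_ge[OF aO])
    moreover have "\<bar>(u \<bullet> a) / h a - (u' \<bullet> a) / h a\<bar> \<le> norm (u - u') / cmin" by (rule ratio_diff[OF aO])
    moreover have "\<bar>(u \<bullet> b) / h b - (u' \<bullet> b) / h b\<bar> \<le> norm (u - u') / cmin" by (rule ratio_diff[OF bO])
    ultimately have "(u \<bullet> b) / h b > Phi u - \<gamma>" using bmax amax nd unfolding abs_le_iff by linarith
    then have "b \<notin> K" using \<gamma>(2) by (meson not_le)
    then have "b \<in> ball a \<epsilon>" using bO by (simp add: K_def)
    then show "dist (alpha u') (alpha u) < \<epsilon>" by (simp add: a_def b_def dist_commute)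
  qed
qed

end

context wulff begin

lemma Bad_sub: "Bad \<subseteq> sphere 0 1" by (auto simp: Bad_def)

lemma sub_Bad_null: "N \<subseteq> Bad \<Longrightarrow> N \<in> null_sets (sphere_measure :: 'a measure)"
  using Bad_sub Bad_negligible
  by (intro sphere_null) (auto intro: negligible_subset[OF _ unit_cone_mono])

lemma Bad_null: "Bad \<in> null_sets (sphere_measure :: 'a measure)" by (rule sub_Bad_null) simp

lemma alpha_meas: "alpha \<in> borel_measurable (sphere_measure :: 'a measure)"
proof (rule borel_measurableI)
  fix O' :: "'a set" assume "open O'"
  then obtain U where U: "open U" "U \<inter> (sphere 0 1 - Bad) = alpha -` O' \<inter> (sphere 0 1 - Bad)"
    using alpha_cont unfolding continuous_on_open_invariant by blast
  have e: "alpha -` O' \<inter> space sphere_measure =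
      ((U \<inter> sphere 0 1) - Bad) \<union> (alpha -` O' \<inter> Bad)"
    using U(2) Bad_sub by (auto simp: sphere_measure_space)
  have "U \<inter> sphere 0 1 \<in> sets (sphere_measure :: 'a measure)"
    using U(1) by (intro borel_Int_sphere_in) auto
  moreover have "Bad \<in> sets (sphere_measure :: 'a measure)" using Bad_null by auto
  moreover have "alpha -` O' \<inter> Bad \<in> sets (sphere_measure :: 'a measure)"
    using sub_Bad_null[of "alpha -` O' \<inter> Bad"] by auto
  ultimately show "alpha -` O' \<inter> space sphere_measure \<in> sets sphere_measure"
    unfolding e by auto
qed

lemma alpha_meas_RB: "alpha \<in> measurable (sphere_measure :: 'a measure) (restrict_space borel (sphere 0 1))"
  unfolding measurable_restrict_space2_iff
  using alpha_meas alpha_O sub by (auto simp: sphere_measure_space)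

lemma rgi_good:
  assumes u: "u \<in> sphere 0 1" "u \<notin> Bad" and eta: "\<eta> \<subseteq> sphere 0 1"
  shows "u \<in> radial_gauss_image_star W \<eta> \<longleftrightarrow> alpha u \<in> \<eta>"
proof -
  have N: "Nrm u = {alpha u}" using alpha_good[OF u] by blast
  have "u \<in> radial_gauss_image_star W \<eta> \<longleftrightarrow> (\<exists>v\<in>\<eta>. v \<in> Nrm u)"
    using u eta unfolding radial_gauss_image_star_def Nrm_def by blast
  also have "\<dots> \<longleftrightarrow> alpha u \<in> \<eta>" using N by auto
  finally show ?thesis .
qed

lemma radial_W_cont: "continuous_on (sphere 0 1) (radial_fun W)"
proof -
  have nz: "\<forall>u\<in>sphere 0 1. Phi u \<noteq> 0"
  proof
    fix u :: 'a assume "u \<in> sphere 0 1" then show "Phi u \<noteq> 0" using Phi_pos[of u] by simp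
  qed
  have "continuous_on (sphere 0 1) (\<lambda>u. 1 / Phi u)"
    using nz by (intro continuous_intros Phi_cont) auto
  then show ?thesis by (rule continuous_on_cong[THEN iffD1, rotated 2]) (auto simp: radial_W)
qed

end

lemma star_radial:
  assumes "star_body_o Q"
  shows "continuous_on (sphere 0 1) (radial_fun Q)" "\<And>u. u \<in> sphere 0 1 \<Longrightarrow> radial_fun Q u > 0"
  using assms unfolding star_body_o_def by auto

context wulff begin

definition g0 :: "real \<Rightarrow> real \<Rightarrow> 'a set \<Rightarrow> 'a \<Rightarrow> real" where
  "g0 q j Q u = radial_fun W u powr q * radial_fun Q u powr (real DIM('a) - q - j)"

lemma g0_cont: "star_body_o Q \<Longrightarrow> continuous_on (sphere 0 1) (g0 q j Q)"
proof -
  assume Q: "star_body_o Q"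
  have nz: "\<forall>u\<in>sphere 0 1. radial_fun W u \<noteq> 0" "\<forall>u\<in>sphere 0 1. radial_fun Q u \<noteq> 0"
  proof
    fix u :: 'a assume "u \<in> sphere 0 1" then show "radial_fun W u \<noteq> 0" using radial_pos[of u] by simp
  next
    show "\<forall>u\<in>sphere 0 1. radial_fun Q u \<noteq> 0"
    proof
      fix u :: 'a assume "u \<in> sphere 0 1" then show "radial_fun Q u \<noteq> 0" using star_radial(2)[OF Q, of u] by simp
    qed
  qed
  show ?thesis unfolding g0_def using star_radial(1)[OF Q] radial_W_cont nz
    by (intro continuous_intros) auto
qed

lemma g0_nonneg: "g0 q j Q u \<ge> 0" unfolding g0_def by simp

lemma curv_eq:
  assumes Q: "star_body_o Q"
  shows "dual_curv_measure q j W Q =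
    distr (density sphere_measure (\<lambda>u. ennreal (g0 q j Q u / real DIM('a)))) (restrict_space borel (sphere 0 1)) alpha"
    (is "_ = ?\<nu>")
proof -
  let ?RB = "restrict_space borel (sphere (0::'a) 1)"
  let ?\<mu> = "\<lambda>\<eta>. ennreal (1 / real DIM('a)) *
        (\<integral>\<^sup>+u\<in>radial_gauss_image_star W \<eta>.
            ennreal (radial_fun W u powr q * radial_fun Q u powr (real DIM('a) - q - j)) \<partial>sphere_measure)"
  have gm: "(\<lambda>u. ennreal (g0 q j Q u / real DIM('a))) \<in> borel_measurable sphere_measure"
    using continuous_on_sphere_measurable[OF g0_cont[OF Q]] by measurable
  have sp: "space ?RB = sphere 0 1" by (simp add: space_restrict_space)
  have sp\<nu>: "space ?\<nu> = sphere 0 1" using sp by simp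
  have sets\<nu>: "sets ?\<nu> = sets ?RB" by simp
  have eq: "?\<mu> \<eta> = emeasure ?\<nu> \<eta>" if \<eta>: "\<eta> \<in> sets ?RB" for \<eta>
  proof -
    have \<eta>S: "\<eta> \<subseteq> sphere 0 1" using sets.sets_into_space[OF \<eta>] sp by simp
    have pre: "alpha -` \<eta> \<inter> space sphere_measure \<in> sets (sphere_measure :: 'a measure)"
      using measurable_sets[OF alpha_meas_RB \<eta>] .
    have "emeasure ?\<nu> \<eta> = emeasure (density sphere_measure (\<lambda>u. ennreal (g0 q j Q u / real DIM('a))))
                 (alpha -` \<eta> \<inter> space sphere_measure)"
      using emeasure_distr[OF _ \<eta>, of alpha "density sphere_measure (\<lambda>u. ennreal (g0 q j Q u / real DIM('a)))"]
        alpha_meas_RB by simp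
    also have "\<dots> = (\<integral>\<^sup>+ u. ennreal (g0 q j Q u / real DIM('a)) * indicator (alpha -` \<eta> \<inter> space sphere_measure) u \<partial>sphere_measure)"
      by (rule emeasure_density[OF gm pre])
    also have "\<dots> = (\<integral>\<^sup>+ u. ennreal (1 / real DIM('a)) * (ennreal (g0 q j Q u) * indicator (alpha -` \<eta> \<inter> space sphere_measure) u) \<partial>sphere_measure)"
    proof (intro nn_integral_cong)
      fix x
      have "ennreal (g0 q j Q x / real DIM('a)) = ennreal (1 / real DIM('a) * g0 q j Q x)" by simp
      also have "\<dots> = ennreal (1 / real DIM('a)) * ennreal (g0 q j Q x)"
        by (rule ennreal_mult) (auto simp: g0_nonneg)
      finally show "ennreal (g0 q j Q x / real DIM('a)) * indicator (alpha -` \<eta> \<inter> space sphere_measure) x =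
         ennreal (1 / real DIM('a)) * (ennreal (g0 q j Q x) * indicator (alpha -` \<eta> \<inter> space sphere_measure) x)"
        by (simp add: mult.assoc)
    qed
    also have "\<dots> = ennreal (1 / real DIM('a)) * (\<integral>\<^sup>+ u. ennreal (g0 q j Q u) * indicator (alpha -` \<eta> \<inter> space sphere_measure) u \<partial>sphere_measure)"
      by (rule nn_integral_cmult)
         (use continuous_on_sphere_measurable[OF g0_cont[OF Q]] pre in measurable)
    also have "(\<integral>\<^sup>+ u. ennreal (g0 q j Q u) * indicator (alpha -` \<eta> \<inter> space sphere_measure) u \<partial>sphere_measure)
        = (\<integral>\<^sup>+u\<in>radial_gauss_image_star W \<eta>.
            ennreal (radial_fun W u powr q * radial_fun Q u powr (real DIM('a) - q - j)) \<partial>sphere_measure)"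
    proof (rule nn_integral_cong_AE)
      have "AE u in sphere_measure. u \<notin> Bad" by (rule AE_not_in[OF Bad_null])
      then show "AE u in sphere_measure. ennreal (g0 q j Q u) * indicator (alpha -` \<eta> \<inter> space sphere_measure) u =
          ennreal (radial_fun W u powr q * radial_fun Q u powr (real DIM('a) - q - j)) * indicator (radial_gauss_image_star W \<eta>) u"
      proof (rule AE_mp[OF _ AE_I2], intro impI)
        fix u assume u: "u \<in> space sphere_measure" "u \<notin> Bad"
        then have uS: "u \<in> sphere 0 1" by (simp add: sphere_measure_space)
        have "u \<in> alpha -` \<eta> \<inter> space sphere_measure \<longleftrightarrow> u \<in> radial_gauss_image_star W \<eta>"
          using rgi_good[OF uS u(2) \<eta>S] u(1) by simp
        then show "ennreal (g0 q j Q u) * indicator (alpha -` \<eta> \<inter> space sphere_measure) u =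
          ennreal (radial_fun W u powr q * radial_fun Q u powr (real DIM('a) - q - j)) * indicator (radial_gauss_image_star W \<eta>) u"
          unfolding g0_def indicator_def by simp
      qed
    qed
    finally show ?thesis by simp
  qed
  have "dual_curv_measure q j W Q = measure_of (sphere 0 1) (sets ?RB) ?\<mu>"
    unfolding dual_curv_measure_def ..
  also have "\<dots> = measure_of (sphere 0 1) (sets ?RB) (emeasure ?\<nu>)"
  proof (rule measure_of_eq)
    show "sets ?RB \<subseteq> Pow (sphere 0 1)" using sets.space_closed[of ?RB] sp by simp
    fix a assume "a \<in> sigma_sets (sphere 0 1) (sets ?RB)"
    then have "a \<in> sets ?RB" using sets.sigma_sets_eq[of ?RB] sp by simp
    then show "?\<mu> a = emeasure ?\<nu> a" by (rule eq)
  qed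
  also have "\<dots> = ?\<nu>"
    using measure_of_of_measure[of ?\<nu>] sp\<nu> sets\<nu> by simp
  finally show ?thesis .
qed

end

lemma dominated_at0:
  fixes s :: "real \<Rightarrow> 'b \<Rightarrow> real" and M :: "'b measure"
  assumes fin: "finite_measure M" and Lm: "L \<in> borel_measurable M"
    and ev: "eventually (\<lambda>t. s t \<in> borel_measurable M \<and> (\<forall>x\<in>space M. \<bar>s t x\<bar> \<le> C)) (at 0)"
    and lim: "AE x in M. ((\<lambda>t. s t x) \<longlongrightarrow> L x) (at 0)"
  shows "((\<lambda>t. \<integral>x. s t x \<partial>M) \<longlongrightarrow> (\<integral>x. L x \<partial>M)) (at 0)"
  unfolding tendsto_at_iff_sequentially
proof (intro allI impI)
  fix X :: "nat \<Rightarrow> real" assume X: "\<forall>i. X i \<in> UNIV - {0}" "X \<longlonglongrightarrow> 0"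
  obtain d where d: "d > 0" "\<forall>t\<in>UNIV. t \<noteq> 0 \<and> dist t 0 < d \<longrightarrow> s t \<in> borel_measurable M \<and> (\<forall>x\<in>space M. \<bar>s t x\<bar> \<le> C)"
    using ev unfolding eventually_at by blast
  obtain N where N: "\<And>i. i \<ge> N \<Longrightarrow> dist (X i) 0 < d"
    using X(2) d(1) unfolding lim_sequentially by blast
  have P: "s (X (i + N)) \<in> borel_measurable M \<and> (\<forall>x\<in>space M. \<bar>s (X (i + N)) x\<bar> \<le> C)" for i
  proof -
    have "X (i + N) \<noteq> 0" using X(1) by blast
    moreover have "dist (X (i + N)) 0 < d" using N[of "i + N"] by simp
    ultimately show ?thesis using d(2) by blast
  qed
  have fl: "filterlim X (at 0) sequentially"
    by (rule filterlim_atI[OF X(2)]) (use X(1) in auto)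
  have "(\<lambda>i. \<integral>x. s (X (i + N)) x \<partial>M) \<longlonglongrightarrow> (\<integral>x. L x \<partial>M)"
  proof (rule integral_dominated_convergence[where w="\<lambda>_. C"])
    show "L \<in> borel_measurable M" by (rule Lm)
    show "\<And>i. (\<lambda>x. s (X (i + N)) x) \<in> borel_measurable M" using P by blast
    show "integrable M (\<lambda>_. C)" by (rule finite_measure.integrable_const[OF fin])
    show "AE x in M. (\<lambda>i. s (X (i + N)) x) \<longlonglongrightarrow> L x"
      using lim
    proof eventually_elim
      case (elim x)
      from filterlim_compose[OF elim fl] have "(\<lambda>i. s (X i) x) \<longlonglongrightarrow> L x" .
      then show "(\<lambda>i. s (X (i + N)) x) \<longlonglongrightarrow> L x" by (rule LIMSEQ_ignore_initial_segment)
    qed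
    show "\<And>i. AE x in M. norm (s (X (i + N)) x) \<le> C"
    proof -
      fix i
      have "\<forall>x\<in>space M. \<bar>s (X (i + N)) x\<bar> \<le> C" using P[of i] by blast
      then show "AE x in M. norm (s (X (i + N)) x) \<le> C"
        by (intro AE_I2) (metis real_norm_def)
    qed
  qed
  then show "((\<lambda>t. \<integral>x. s t x \<partial>M) \<circ> X) \<longlonglongrightarrow> (\<integral>x. L x \<partial>M)"
    unfolding comp_def by (rule LIMSEQ_offset[where k=N])
qed

lemma cont_sphere_bounded:
  fixes g :: "'a::euclidean_space \<Rightarrow> real"
  assumes "continuous_on (sphere 0 1) g"
  shows "\<exists>B. \<forall>u\<in>sphere 0 1. \<bar>g u\<bar> \<le> B"
proof -
  have "bounded (g ` sphere 0 1)" by (rule compact_imp_bounded[OF compact_continuous_image[OF assms compact_sphere]])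
  then obtain B where "\<forall>y\<in>g ` sphere 0 1. norm y \<le> B" unfolding bounded_iff by blast
  then show ?thesis by auto
qed

lemma cont_sphere_integrable:
  fixes g :: "'a::euclidean_space \<Rightarrow> real"
  assumes "continuous_on (sphere 0 1) g"
  shows "integrable sphere_measure g"
proof -
  obtain B where B: "\<forall>u\<in>sphere 0 1. \<bar>g u\<bar> \<le> B" using cont_sphere_bounded[OF assms] by blast
  show ?thesis
    by (rule finite_measure.integrable_const_bound[OF finite_measure_sphere, where B=B])
       (use B continuous_on_sphere_measurable[OF assms] in \<open>auto intro!: AE_I2 simp: sphere_measure_space\<close>)
qed

lemma exp_sub_one_bound: "\<bar>exp x - 1\<bar> \<le> \<bar>x\<bar> * exp \<bar>x\<bar>" for x :: real
proof (cases "x \<ge> 0")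
  case True
  have "1 - x \<le> exp (- x)" using exp_ge_add_one_self[of "-x"] by simp
  then have "(1 - x) * exp x \<le> exp (- x) * exp x" by (rule mult_right_mono) simp
  moreover have "exp (- x) * exp x = 1" by (simp add: exp_minus_inverse mult.commute)
  moreover have "(1 - x) * exp x = exp x - x * exp x" by (simp add: algebra_simps)
  ultimately have "exp x - 1 \<le> x * exp x" by linarith
  moreover have "exp x \<ge> 1" using True by simp
  moreover have "\<bar>x\<bar> = x" using True by simp
  ultimately show ?thesis by simp
next
  case False
  have "1 + x \<le> exp x" by (rule exp_ge_add_one_self)
  moreover have "exp x \<le> 1" using False by simp
  moreover have "\<bar>x\<bar> \<le> \<bar>x\<bar> * exp \<bar>x\<bar>"
  proof -
    have "1 \<le> exp \<bar>x\<bar>" by simp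
    from mult_left_mono[OF this abs_ge_zero[of x]] show ?thesis by simp
  qed
  moreover have "\<bar>x\<bar> = - x" using False by simp
  moreover have "\<bar>exp x - 1\<bar> = 1 - exp x" using \<open>exp x \<le> 1\<close> by simp
  ultimately show ?thesis by linarith
qed

context lfam begin

definition AA :: "real \<Rightarrow> real \<Rightarrow> 'a set \<Rightarrow> real \<Rightarrow> 'a \<Rightarrow> real" where
  "AA q j Q t u = radial_fun (wulff_shape \<Omega> (h t)) u powr q * radial_fun Q u powr (real DIM('a) - q - j)"

lemma AA_g0: "\<bar>t\<bar> < \<delta> \<Longrightarrow> AA q j Q t = wulff.g0 \<Omega> (h t) q j Q"
  unfolding fun_eq_iff AA_def using wulff.g0_def[OF wt] by simp

lemma AA_cont: "\<bar>t\<bar> < \<delta> \<Longrightarrow> star_body_o Q \<Longrightarrow> continuous_on (sphere 0 1) (AA q j Q t)"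
  using AA_g0 wulff.g0_cont[OF wt] by simp

lemma AA_rep:
  assumes t: "\<bar>t\<bar> < \<delta>" and u: "u \<in> sphere 0 1"
  shows "AA q j Q t u = exp (- q * ln (Ph t u)) * radial_fun Q u powr (real DIM('a) - q - j)"
proof -
  interpret Wt: wulff \<Omega> "h t" by (rule wt[OF t])
  have P: "Ph t u > 0" using Wt.Phi_pos[OF u] .
  have r: "radial_fun (wulff_shape \<Omega> (h t)) u = 1 / Ph t u" using Wt.radial_W[OF u] .
  have "(1 / Ph t u) powr q = exp (q * ln (1 / Ph t u))" using P by (simp add: powr_def)
  also have "ln (1 / Ph t u) = - ln (Ph t u)" using P by (simp add: ln_div)
  finally have "(1 / Ph t u) powr q = exp (- q * ln (Ph t u))" by simp
  then show ?thesis unfolding AA_def r by simp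
qed

lemma AA_rel:
  assumes t: "\<bar>t\<bar> < \<delta>" and u: "u \<in> sphere 0 1"
  shows "AA q j Q t u = AA q j Q 0 u * exp (q * (ln (Ph 0 u) - ln (Ph t u)))"
proof -
  have t0: "\<bar>0::real\<bar> < \<delta>" using dpos by simp
  have "exp (- q * ln (Ph t u)) = exp (- q * ln (Ph 0 u)) * exp (q * (ln (Ph 0 u) - ln (Ph t u)))"
    by (simp add: exp_add[symmetric] algebra_simps)
  then show ?thesis unfolding AA_rep[OF t u] AA_rep[OF t0 u] by simp
qed

lemma s_lim:
  assumes u: "u \<in> sphere 0 1" "u \<notin> wulff.Bad \<Omega> (h 0)"
  shows "((\<lambda>t. (AA q j Q t u - AA q j Q 0 u) / t) \<longlongrightarrow> q * AA q j Q 0 u * f (wulff.alpha \<Omega> (h 0) u)) (at 0)"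
proof -
  interpret W0: wulff \<Omega> "h 0" by (rule w0)
  define a where "a = W0.alpha u"
  define D where "D t = ln (Ph 0 u) - ln (Ph t u)" for t
  have A: "W0.Amax u = {a}" using W0.alpha_good[OF u] by (simp add: a_def)
  have "((\<lambda>t. D t / t) \<longlongrightarrow> f a) (at 0)" unfolding D_def by (rule deriv_good[OF u(1) A])
  then have dD: "(D has_field_derivative f a) (at 0)"
    unfolding has_field_derivative_iff by (simp add: D_def)
  have "((\<lambda>t. exp (q * D t)) has_field_derivative exp (q * D 0) * (q * f a)) (at 0)"
    by (rule DERIV_chain2[OF DERIV_exp DERIV_cmult[OF dD]])
  then have "((\<lambda>y. (exp (q * D y) - exp (q * D 0)) / (y - 0)) \<longlongrightarrow> exp (q * D 0) * (q * f a)) (at 0)"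
    unfolding has_field_derivative_iff .
  then have "((\<lambda>y. (exp (q * D y) - 1) / y) \<longlongrightarrow> q * f a) (at 0)" by (simp add: D_def)
  then have lim: "((\<lambda>y. AA q j Q 0 u * ((exp (q * D y) - 1) / y)) \<longlongrightarrow> AA q j Q 0 u * (q * f a)) (at 0)"
    by (rule tendsto_mult_left)
  have "eventually (\<lambda>t. \<bar>t\<bar> < \<delta>) (at (0::real))"
  proof -
    have "eventually (\<lambda>t. dist t 0 < \<delta>) (at (0::real))" by (rule tendstoD[OF tendsto_ident_at dpos])
    then show ?thesis by (rule eventually_mono) (simp add: dist_real_def)
  qed
  then have "eventually (\<lambda>y. AA q j Q 0 u * ((exp (q * D y) - 1) / y) = (AA q j Q y u - AA q j Q 0 u) / y) (at 0)"
  proof (rule eventually_mono)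
    fix y :: real assume "\<bar>y\<bar> < \<delta>"
    from AA_rel[OF this u(1)] show "AA q j Q 0 u * ((exp (q * D y) - 1) / y) = (AA q j Q y u - AA q j Q 0 u) / y"
      by (simp add: D_def algebra_simps diff_divide_distrib)
  qed
  from Lim_transform_eventually[OF lim this] show ?thesis by (simp add: a_def mult.assoc mult.left_commute)
qed

lemma s_bound:
  assumes Q: "star_body_o Q"
  shows "\<exists>C. eventually (\<lambda>t. \<forall>u\<in>sphere 0 1. \<bar>(AA q j Q t u - AA q j Q 0 u) / t\<bar> \<le> C) (at 0)"
proof -
  have t0: "\<bar>0::real\<bar> < \<delta>" using dpos by simp
  obtain B0 where B0: "\<forall>u\<in>sphere 0 1. \<bar>AA q j Q 0 u\<bar> \<le> B0"
    using cont_sphere_bounded[OF AA_cont[OF t0 Q]] by blast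
  define E where "E = \<bar>q\<bar> * (FF + 1) * exp (\<bar>q\<bar> * (FF + 1))"
  have E0: "E \<ge> 0" using FF(1) by (simp add: E_def)
  have ev1: "eventually (\<lambda>t. \<bar>t\<bar> < \<delta> \<and> (\<forall>v\<in>\<Omega>. \<bar>e t v / t\<bar> < 1) \<and> (\<forall>v\<in>\<Omega>. \<bar>k t v\<bar> \<le> \<bar>t\<bar> * (FF + 1))) (at 0)"
    by (rule k_small) simp
  have "eventually (\<lambda>t. dist t 0 < 1) (at (0::real))" by (rule tendstoD[OF tendsto_ident_at]) simp
  then have ev2: "eventually (\<lambda>t. \<bar>t\<bar> < 1) (at (0::real))"
    by (rule eventually_mono) (simp add: dist_real_def)
  have ev3: "eventually (\<lambda>t::real. t \<noteq> 0) (at 0)" by (rule eventually_neq_at_within)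
  have "eventually (\<lambda>t. \<forall>u\<in>sphere 0 1. \<bar>(AA q j Q t u - AA q j Q 0 u) / t\<bar> \<le> B0 * E) (at 0)"
    using ev1 ev2 ev3
  proof eventually_elim
    case (elim t)
    have t: "\<bar>t\<bar> < \<delta>" and K: "\<forall>v\<in>\<Omega>. \<bar>k t v\<bar> \<le> \<bar>t\<bar> * (FF + 1)" and t1: "\<bar>t\<bar> < 1"
      and tn: "t \<noteq> 0" using elim by auto
    show ?case
    proof
      fix u :: 'a assume u: "u \<in> sphere 0 1"
      define x where "x = q * (ln (Ph 0 u) - ln (Ph t u))"
      have Db: "\<bar>ln (Ph t u) - ln (Ph 0 u)\<bar> \<le> \<bar>t\<bar> * (FF + 1)" by (rule lnPhi_bound[OF t K u])
      have xb: "\<bar>x\<bar> \<le> \<bar>q\<bar> * (\<bar>t\<bar> * (FF + 1))"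
      proof -
        have "\<bar>x\<bar> = \<bar>q\<bar> * \<bar>ln (Ph t u) - ln (Ph 0 u)\<bar>" by (simp add: x_def abs_mult abs_minus_commute)
        also have "\<dots> \<le> \<bar>q\<bar> * (\<bar>t\<bar> * (FF + 1))" by (rule mult_left_mono[OF Db]) simp
        finally show ?thesis .
      qed
      have xb1: "\<bar>x\<bar> \<le> \<bar>q\<bar> * (FF + 1)"
      proof -
        have "\<bar>t\<bar> * (FF + 1) \<le> 1 * (FF + 1)" using t1 FF(1) by (intro mult_right_mono) auto
        then have "\<bar>q\<bar> * (\<bar>t\<bar> * (FF + 1)) \<le> \<bar>q\<bar> * (FF + 1)" by (intro mult_left_mono) auto
        then show ?thesis using xb by linarith
      qed
      have "\<bar>exp x - 1\<bar> \<le> \<bar>x\<bar> * exp \<bar>x\<bar>" by (rule exp_sub_one_bound)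
      also have "\<dots> \<le> (\<bar>q\<bar> * (\<bar>t\<bar> * (FF + 1))) * exp (\<bar>q\<bar> * (FF + 1))"
        using xb xb1 by (intro mult_mono) auto
      also have "\<dots> = \<bar>t\<bar> * E" by (simp add: E_def algebra_simps)
      finally have ex: "\<bar>exp x - 1\<bar> \<le> \<bar>t\<bar> * E" .
      have eqq: "(AA q j Q t u - AA q j Q 0 u) / t = AA q j Q 0 u * (exp x - 1) / t"
        using AA_rel[OF t u] by (simp add: x_def algebra_simps)
      have "\<bar>(AA q j Q t u - AA q j Q 0 u) / t\<bar> = \<bar>AA q j Q 0 u\<bar> * \<bar>exp x - 1\<bar> / \<bar>t\<bar>"
        unfolding eqq abs_divide abs_mult by (rule refl)
      also have "\<dots> \<le> B0 * (\<bar>t\<bar> * E) / \<bar>t\<bar>"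
        using B0 u ex by (intro divide_right_mono mult_mono) auto
      also have "\<dots> = B0 * E" using tn by simp
      finally show "\<bar>(AA q j Q t u - AA q j Q 0 u) / t\<bar> \<le> B0 * E" .
    qed
  qed
  then show ?thesis by blast
qed

lemma main:
  assumes Q: "star_body_o Q"
  shows "((\<lambda>t. (dual_quermass q j (wulff_shape \<Omega> (h t)) Q
                 - dual_quermass q j (wulff_shape \<Omega> (h 0)) Q) / t)
          \<longlongrightarrow> q * (\<integral>v\<in>\<Omega>. f v \<partial>dual_curv_measure q j (wulff_shape \<Omega> (h 0)) Q)) (at 0)"
proof -
  interpret W0: wulff \<Omega> "h 0" by (rule w0)
  have t0: "\<bar>0::real\<bar> < \<delta>" using dpos by simp
  define s where "s t u = (AA q j Q t u - AA q j Q 0 u) / t" for t u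
  define F where "F u = indicator \<Omega> (W0.alpha u) *\<^sub>R f (W0.alpha u)" for u
  define L where "L u = q * AA q j Q 0 u * F u" for u
  have Ob: "\<Omega> \<in> sets borel" by (rule borel_compact[OF cpt])
  have fi: "(\<lambda>v. indicator \<Omega> v *\<^sub>R f v) \<in> borel_measurable borel"
    by (rule borel_measurable_continuous_on_indicator[OF Ob fcont])
  have Fm: "F \<in> borel_measurable sphere_measure"
    unfolding F_def by (rule measurable_compose[OF W0.alpha_meas fi])
  have F_eq: "F u = f (W0.alpha u)" for u using W0.alpha_O[of u] by (simp add: F_def)
  have A0m: "AA q j Q 0 \<in> borel_measurable sphere_measure"
    by (rule continuous_on_sphere_measurable[OF AA_cont[OF t0 Q]])
  have Lm: "L \<in> borel_measurable sphere_measure"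
    unfolding L_def by (intro borel_measurable_times borel_measurable_const A0m Fm)
  obtain C where C: "eventually (\<lambda>t. \<forall>u\<in>sphere 0 1. \<bar>(AA q j Q t u - AA q j Q 0 u) / t\<bar> \<le> C) (at 0)"
    using s_bound[OF Q] by blast
  have evd: "eventually (\<lambda>t. \<bar>t\<bar> < \<delta>) (at (0::real))"
  proof -
    have "eventually (\<lambda>t. dist t 0 < \<delta>) (at (0::real))" by (rule tendstoD[OF tendsto_ident_at dpos])
    then show ?thesis by (rule eventually_mono) (simp add: dist_real_def)
  qed
  have ev: "eventually (\<lambda>t. s t \<in> borel_measurable sphere_measure \<and> (\<forall>x\<in>space sphere_measure. \<bar>s t x\<bar> \<le> C)) (at 0)"
    using C evd eventually_neq_at_within[of "0::real" 0 UNIV]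
  proof eventually_elim
    case (elim t)
    have "continuous_on (sphere 0 1) (s t)" unfolding s_def
      using AA_cont[OF elim(2) Q] AA_cont[OF t0 Q] elim(3) by (intro continuous_intros) auto
    then have "s t \<in> borel_measurable sphere_measure" by (rule continuous_on_sphere_measurable)
    then show ?case using elim(1) by (simp add: s_def sphere_measure_space)
  qed
  have lim: "AE u in sphere_measure. ((\<lambda>t. s t u) \<longlongrightarrow> L u) (at 0)"
  proof -
    have "AE u in sphere_measure. u \<notin> W0.Bad" by (rule AE_not_in[OF W0.Bad_null])
    then show ?thesis
    proof (rule AE_mp[OF _ AE_I2], intro impI)
      fix u assume u: "u \<in> space sphere_measure" "u \<notin> W0.Bad"
      then have uS: "u \<in> sphere 0 1" by (simp add: sphere_measure_space)
      show "((\<lambda>t. s t u) \<longlongrightarrow> L u) (at 0)"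
        unfolding s_def L_def F_eq using s_lim[OF uS u(2)] .
    qed
  qed
  have I: "((\<lambda>t. \<integral>u. s t u \<partial>sphere_measure) \<longlongrightarrow> (\<integral>u. L u \<partial>sphere_measure)) (at 0)"
    by (rule dominated_at0[OF finite_measure_sphere Lm ev lim])
  then have I2: "((\<lambda>t. (1 / real DIM('a)) * (\<integral>u. s t u \<partial>sphere_measure)) \<longlongrightarrow> (1 / real DIM('a)) * (\<integral>u. L u \<partial>sphere_measure)) (at 0)"
    by (rule tendsto_mult_left)
  have dq: "dual_quermass q j (wulff_shape \<Omega> (h t)) Q = (1 / real DIM('a)) * (\<integral>u. AA q j Q t u \<partial>sphere_measure)" for t
    unfolding dual_quermass_def AA_def ..
  have eqev: "eventually (\<lambda>t. (1 / real DIM('a)) * (\<integral>u. s t u \<partial>sphere_measure) =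
      (dual_quermass q j (wulff_shape \<Omega> (h t)) Q - dual_quermass q j (wulff_shape \<Omega> (h 0)) Q) / t) (at 0)"
    using evd
  proof (rule eventually_mono)
    fix t :: real assume t: "\<bar>t\<bar> < \<delta>"
    have i1: "integrable sphere_measure (AA q j Q t)" by (rule cont_sphere_integrable[OF AA_cont[OF t Q]])
    have i0: "integrable sphere_measure (AA q j Q 0)" by (rule cont_sphere_integrable[OF AA_cont[OF t0 Q]])
    have "(\<integral>u. s t u \<partial>sphere_measure) = (\<integral>u. (AA q j Q t u - AA q j Q 0 u) \<partial>sphere_measure) / t"
      unfolding s_def by (rule integral_divide_zero)
    also have "(\<integral>u. (AA q j Q t u - AA q j Q 0 u) \<partial>sphere_measure)
        = (\<integral>u. AA q j Q t u \<partial>sphere_measure) - (\<integral>u. AA q j Q 0 u \<partial>sphere_measure)"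
      by (rule Bochner_Integration.integral_diff[OF i1 i0])
    finally have Z: "(\<integral>u. s t u \<partial>sphere_measure) = ((\<integral>u. AA q j Q t u \<partial>sphere_measure) - (\<integral>u. AA q j Q 0 u \<partial>sphere_measure)) / t" .
    show "(1 / real DIM('a)) * (\<integral>u. s t u \<partial>sphere_measure) =
      (dual_quermass q j (wulff_shape \<Omega> (h t)) Q - dual_quermass q j (wulff_shape \<Omega> (h 0)) Q) / t"
      unfolding dq Z by (simp add: divide_inverse algebra_simps)
  qed
  have LHS: "((\<lambda>t. (dual_quermass q j (wulff_shape \<Omega> (h t)) Q - dual_quermass q j (wulff_shape \<Omega> (h 0)) Q) / t)
      \<longlongrightarrow> (1 / real DIM('a)) * (\<integral>u. L u \<partial>sphere_measure)) (at 0)"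
    by (rule Lim_transform_eventually[OF I2 eqev])
  define g where "g u = AA q j Q 0 u / real DIM('a)" for u
  have gm: "g \<in> borel_measurable sphere_measure" unfolding g_def using A0m by measurable
  have g0eq: "W0.g0 q j Q = AA q j Q 0" using AA_g0[OF t0] by simp
  have curv: "dual_curv_measure q j (wulff_shape \<Omega> (h 0)) Q =
      distr (density sphere_measure (\<lambda>u. ennreal (g u))) (restrict_space borel (sphere 0 1)) W0.alpha"
    using W0.curv_eq[OF Q, of q j] unfolding g0eq g_def .
  have am: "W0.alpha \<in> measurable (density sphere_measure (\<lambda>u. ennreal (g u))) (restrict_space borel (sphere 0 1))"
    using W0.alpha_meas_RB by simp
  have fiRB: "(\<lambda>v. indicator \<Omega> v *\<^sub>R f v) \<in> borel_measurable (restrict_space borel (sphere 0 1))"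
    by (rule measurable_restrict_space1[OF fi])
  have "(\<integral>v\<in>\<Omega>. f v \<partial>dual_curv_measure q j (wulff_shape \<Omega> (h 0)) Q)
      = (\<integral>u. F u \<partial>density sphere_measure (\<lambda>u. ennreal (g u)))"
    unfolding set_lebesgue_integral_def curv F_def by (rule integral_distr[OF am fiRB])
  also have "\<dots> = (\<integral>u. g u *\<^sub>R F u \<partial>sphere_measure)"
  proof (rule integral_density[OF Fm gm])
    show "AE x in sphere_measure. 0 \<le> g x"
      by (rule AE_I2) (simp add: g_def AA_def)
  qed
  finally have R: "(\<integral>v\<in>\<Omega>. f v \<partial>dual_curv_measure q j (wulff_shape \<Omega> (h 0)) Q)
      = (\<integral>u. g u * F u \<partial>sphere_measure)" by simp
  have "(1 / real DIM('a)) * (\<integral>u. L u \<partial>sphere_measure) = q * (\<integral>u. g u * F u \<partial>sphere_measure)"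
  proof -
    have "(1 / real DIM('a)) * (\<integral>u. L u \<partial>sphere_measure) = (\<integral>u. (1 / real DIM('a)) * L u \<partial>sphere_measure)"
      by (rule integral_mult_right_zero[symmetric])
    also have "\<dots> = (\<integral>u. q * (g u * F u) \<partial>sphere_measure)"
      by (rule Bochner_Integration.integral_cong) (simp_all add: L_def g_def)
    also have "\<dots> = q * (\<integral>u. g u * F u \<partial>sphere_measure)"
      by (rule integral_mult_right_zero)
    finally show ?thesis .
  qed
  with LHS R show ?thesis by simp
qed

end

theorem theorem4p2:
  fixes \<Omega> :: "'a::euclidean_space set" and h :: "real \<Rightarrow> 'a \<Rightarrow> real" and f :: "'a \<Rightarrow> real"
    and Q :: "'a set" and q j :: real
  assumes "closed \<Omega>" and "\<Omega> \<subseteq> sphere 0 1"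
    and "\<forall>u\<in>sphere 0 1. \<not> \<Omega> \<subseteq> closed_hemisphere u"
    and "continuous_on \<Omega> (h 0)" and "\<forall>v\<in>\<Omega>. h 0 v > 0"
    and "continuous_on \<Omega> f"
    and "log_family \<Omega> h f"
    and "star_body_o Q" and "j \<noteq> real DIM('a)" and "q \<noteq> 0"
  shows "((\<lambda>t. (dual_quermass q j (wulff_shape \<Omega> (h t)) Q
                 - dual_quermass q j (wulff_shape \<Omega> (h 0)) Q) / t)
          \<longlongrightarrow> q * (\<integral>v\<in>\<Omega>. f v \<partial>dual_curv_measure q j (wulff_shape \<Omega> (h 0)) Q)) (at 0)"
proof -
  from assms(7) obtain \<delta> e where d: "\<delta> > 0"
    and fam: "\<forall>t\<in>{-\<delta><..<\<delta>}. continuous_on \<Omega> (h t) \<and> (\<forall>v\<in>\<Omega>. h t v > 0)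
         \<and> continuous_on \<Omega> (e t)
         \<and> (\<forall>v\<in>\<Omega>. ln (h t v) = ln (h 0 v) + t * f v + e t v)"
    and ul: "uniform_limit \<Omega> (\<lambda>t v. e t v / t) (\<lambda>v. 0) (at 0)"
    unfolding log_family_def by blast
  have cpt: "compact \<Omega>"
    using assms(1) bounded_subset[OF bounded_sphere assms(2)] by (simp add: compact_eq_bounded_closed)
  interpret L: lfam \<Omega> h f \<delta> e
  proof
    show "compact \<Omega>" by (rule cpt)
    show "\<Omega> \<subseteq> sphere 0 1" by (rule assms(2))
    show "\<forall>u\<in>sphere 0 1. \<not> \<Omega> \<subseteq> closed_hemisphere u" by (rule assms(3))
    show "continuous_on \<Omega> f" by (rule assms(6))
    show "\<delta> > 0" by (rule d)
    show "uniform_limit \<Omega> (\<lambda>t v. e t v / t) (\<lambda>v. 0) (at 0)" by (rule ul)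
    fix t :: real assume "t \<in> {-\<delta><..<\<delta>}"
    then show "continuous_on \<Omega> (h t) \<and> (\<forall>v\<in>\<Omega>. h t v > 0)
         \<and> (\<forall>v\<in>\<Omega>. ln (h t v) = ln (h 0 v) + t * f v + e t v)"
      using fam by blast
  qed
  show ?thesis by (rule L.main[OF assms(8)])
qed

end
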